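(* Let $(t_1,\dots,t_k)$ be a vector with $t_i \ge \nu_i$ for every player $i$. Then there exists a profile of pure strategies forming an equilibrium in which the utility of each player $i$ is exactly $t_i$ if and only if there exists an infinite path in the game graph $G$ whose mean-payoff vector is $(t_1,\dots,t_k)$.
   Context: A $k$-player alternating move game has finite action sets $A_1,\dots,A_k$ and utilities $u_i:A_1\times\dots\times A_k\to[-1,1]$. In round $t$ player $j=1+(t\bmod k)$ chooses an action; the action vector $a^t$ consists of each player's most recent action; in round $t$ player $i$ receives $u_i(a^t)$ (utility $0$ in the first $k$ rounds). Strategies map histories to (distributions over) actions; pure strategies are deterministic. Player $i$'s utility under a profile is $\liminf_{t\to\infty}$ of the expected value of $\frac1t\sum_{s=1}^t u_i(a^s)$. An equilibrium is a profile from which no player can strictly improve his utility by unilateral deviation. The game graph $G$ has vertex set $(A_1\times\dots\times A_k)\times\{1,\dots,k\}$, vertex $(\vec a,i)$ being owned by player $i$; there is an edge from $(\vec a,i)$ to $(\vec b,i+1)$ (with $k+1$ read as $1$) iff $\vec a$ and $\vec b$ differ at most in coordinate $i$, and its weight is the vector $(u_1(\vec b),\dots,u_k(\vec b))$. The mean-payoff vector of an infinite path has $i$-th coordinate $\liminf_{t\to\infty}\frac1t\sum_{s=1}^t w_i(e_s)$, where $w_i$ is the $i$-th weight coordinate. For each player $i$, $\nu_i$ is the value of the two-player zero-sum mean-payoff game on $G$ with weights $w_i$ in which a maximizer controls player $i$'s vertices and a minimizer controls all other vertices (i.e., the best utility player $i$ can guarantee against all the other players jointly). *)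

theory Defs
  imports "HOL-Probability.Probability"
begin

(* Conventions: players are indexed 0..k-1 (paper's player i is our i-1).
   Rounds are numbered 1,2,...; in round t the mover is player (t mod k)
   (paper: player 1 + (t mod k)).
   A history of length n lists the actions chosen in rounds 1..n. *)

definition mover :: "nat \<Rightarrow> nat \<Rightarrow> nat" where
  "mover k t = t mod k"

definition valid_vec :: "nat \<Rightarrow> (nat \<Rightarrow> 'a set) \<Rightarrow> 'a list \<Rightarrow> bool" where
  "valid_vec k A a \<longleftrightarrow> length a = k \<and> (\<forall>l<k. a ! l \<in> A l)"

definition valid_strat :: "(nat \<Rightarrow> 'a set) \<Rightarrow> nat \<Rightarrow> ('a list \<Rightarrow> 'a pmf) \<Rightarrow> bool" where
  "valid_strat A i \<tau> \<longleftrightarrow> (\<forall>h. set_pmf (\<tau> h) \<subseteq> A i)"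

definition valid_profile :: "nat \<Rightarrow> (nat \<Rightarrow> 'a set) \<Rightarrow> (nat \<Rightarrow> 'a list \<Rightarrow> 'a pmf) \<Rightarrow> bool" where
  "valid_profile k A \<sigma> \<longleftrightarrow> (\<forall>i<k. valid_strat A i (\<sigma> i))"

primrec hist_dist :: "nat \<Rightarrow> (nat \<Rightarrow> 'a list \<Rightarrow> 'a pmf) \<Rightarrow> nat \<Rightarrow> 'a list pmf" where
  "hist_dist k \<sigma> 0 = return_pmf []"
| "hist_dist k \<sigma> (Suc n) =
     bind_pmf (hist_dist k \<sigma> n) (\<lambda>h. map_pmf (\<lambda>a. h @ [a]) (\<sigma> (mover k (Suc n)) h))"

(* action vector a^s in round s (s > k): each player's most recent action
   up to and including round s; player i last moved in round
   s - ((s - i) mod k), whose action is stored at index that minus 1 *)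
definition action_vec :: "nat \<Rightarrow> 'a list \<Rightarrow> nat \<Rightarrow> 'a list" where
  "action_vec k h s = map (\<lambda>i. h ! (s - (s - i) mod k - 1)) [0..<k]"

definition stage_util :: "nat \<Rightarrow> (nat \<Rightarrow> 'a list \<Rightarrow> real) \<Rightarrow> nat \<Rightarrow> 'a list \<Rightarrow> nat \<Rightarrow> real" where
  "stage_util k u i h s = (if s \<le> k then 0 else u i (action_vec k h s))"

definition game_utility ::
  "nat \<Rightarrow> (nat \<Rightarrow> 'a list \<Rightarrow> real) \<Rightarrow> (nat \<Rightarrow> 'a list \<Rightarrow> 'a pmf) \<Rightarrow> nat \<Rightarrow> ereal" where
  "game_utility k u \<sigma> i =
     liminf (\<lambda>t. ereal (measure_pmf.expectation (hist_dist k \<sigma> t)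
        (\<lambda>h. (\<Sum>s=1..t. stage_util k u i h s) / real t)))"

definition is_equilibrium ::
  "nat \<Rightarrow> (nat \<Rightarrow> 'a set) \<Rightarrow> (nat \<Rightarrow> 'a list \<Rightarrow> real) \<Rightarrow> (nat \<Rightarrow> 'a list \<Rightarrow> 'a pmf) \<Rightarrow> bool" where
  "is_equilibrium k A u \<sigma> \<longleftrightarrow> valid_profile k A \<sigma> \<and>
     (\<forall>i<k. \<forall>\<tau>. valid_strat A i \<tau> \<longrightarrow>
        game_utility k u (\<sigma>(i := \<tau>)) i \<le> game_utility k u \<sigma> i)"

definition pure_profile :: "(nat \<Rightarrow> 'a list \<Rightarrow> 'a) \<Rightarrow> nat \<Rightarrow> 'a list \<Rightarrow> 'a pmf" where
  "pure_profile f = (\<lambda>i h. return_pmf (f i h))"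

definition valid_pure :: "nat \<Rightarrow> (nat \<Rightarrow> 'a set) \<Rightarrow> (nat \<Rightarrow> 'a list \<Rightarrow> 'a) \<Rightarrow> bool" where
  "valid_pure k A f \<longleftrightarrow> (\<forall>i<k. \<forall>h. f i h \<in> A i)"

(* nu_i: the value of the zero-sum game in which player i maximises his utility
   against all other players jointly (lower value, pure strategies;
   mean-payoff games of perfect information are determined in pure strategies) *)
definition nu :: "nat \<Rightarrow> (nat \<Rightarrow> 'a set) \<Rightarrow> (nat \<Rightarrow> 'a list \<Rightarrow> real) \<Rightarrow> nat \<Rightarrow> ereal" where
  "nu k A u i =
     (SUP g\<in>{g. \<forall>h. g h \<in> A i}.
        INF f\<in>{f. valid_pure k A f}. game_utility k u (pure_profile (f(i := g))) i)"

definition is_vertex :: "nat \<Rightarrow> (nat \<Rightarrow> 'a set) \<Rightarrow> 'a list \<times> nat \<Rightarrow> bool" where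
  "is_vertex k A v \<longleftrightarrow> valid_vec k A (fst v) \<and> snd v < k"

definition is_edge :: "nat \<Rightarrow> 'a list \<times> nat \<Rightarrow> 'a list \<times> nat \<Rightarrow> bool" where
  "is_edge k v w \<longleftrightarrow> snd w = (snd v + 1) mod k \<and>
     (\<forall>l<k. l \<noteq> snd v \<longrightarrow> fst w ! l = fst v ! l)"

definition is_inf_path :: "nat \<Rightarrow> (nat \<Rightarrow> 'a set) \<Rightarrow> (nat \<Rightarrow> 'a list \<times> nat) \<Rightarrow> bool" where
  "is_inf_path k A p \<longleftrightarrow> (\<forall>n. is_vertex k A (p n)) \<and> (\<forall>n. is_edge k (p n) (p (Suc n)))"

(* i-th coordinate of the mean-payoff vector: the s-th edge (s >= 1) goes
   from p (s-1) to p s and has weight u_i(fst (p s)) *)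
definition mean_payoff :: "(nat \<Rightarrow> 'a list \<Rightarrow> real) \<Rightarrow> (nat \<Rightarrow> 'a list \<times> nat) \<Rightarrow> nat \<Rightarrow> ereal" where
  "mean_payoff u p i = liminf (\<lambda>t. ereal ((\<Sum>s=1..t. u i (fst (p s))) / real t))"

end

theory Submission
  imports Defs
begin

locale G =
  fixes k :: nat and A :: "nat \<Rightarrow> 'a set" and u :: "nat \<Rightarrow> 'a list \<Rightarrow> real"
  assumes kpos: "0 < k" and finA: "\<And>i. i < k \<Longrightarrow> finite (A i)"
    and neA: "\<And>i. i < k \<Longrightarrow> A i \<noteq> {}"
    and ub: "\<And>i a. i < k \<Longrightarrow> valid_vec k A a \<Longrightarrow> \<bar>u i a\<bar> \<le> 1"
begin

primrec W :: "nat \<Rightarrow> nat \<Rightarrow> 'a list \<Rightarrow> nat \<Rightarrow> real" where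
  "W d 0 a j = 0"
| "W d (Suc n) a j = (if j = d then Max else Min)
      ((\<lambda>b. u d (a[j:=b]) + W d n (a[j:=b]) (Suc j mod k)) ` A j)"

definition sv :: "nat \<Rightarrow> nat \<Rightarrow> 'a list \<Rightarrow> nat \<Rightarrow> 'a \<Rightarrow> real" where
  "sv d n a j b = u d (a[j:=b]) + W d n (a[j:=b]) (Suc j mod k)"

lemma W_Suc: "W d (Suc n) a j = (if j = d then Max else Min) (sv d n a j ` A j)"
  by (simp add: sv_def)

declare W.simps(2)[simp del]

lemma valid_upd: "valid_vec k A a \<Longrightarrow> j < k \<Longrightarrow> b \<in> A j \<Longrightarrow> valid_vec k A (a[j:=b])"
  unfolding valid_vec_def by (auto simp: nth_list_update)

lemma W_attained: assumes "j < k" shows "\<exists>b\<in>A j. sv d n a j b = W d (Suc n) a j"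
proof -
  have f: "finite (sv d n a j ` A j)" "sv d n a j ` A j \<noteq> {}" using finA neA assms by auto
  show ?thesis using Max_in[OF f] Min_in[OF f] by (auto simp: W_Suc)
qed

definition gopt :: "nat \<Rightarrow> nat \<Rightarrow> 'a list \<Rightarrow> nat \<Rightarrow> 'a" where
  "gopt d n a j = (SOME b. b \<in> A j \<and> sv d n a j b = W d (Suc n) a j)"

lemma gopt: assumes "j < k" shows "gopt d n a j \<in> A j" "sv d n a j (gopt d n a j) = W d (Suc n) a j"
  using someI_ex[OF W_attained[OF assms, of d n a, unfolded Bex_def]] unfolding gopt_def by auto

lemma W_ge: assumes "j < k" "b \<in> A j" "j = d \<or> b = gopt d n a j"
  shows "sv d n a j b \<le> W d (Suc n) a j"
proof (cases "j = d")
  case True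
  have f: "finite (sv d n a j ` A j)" using finA assms by auto
  show ?thesis using True Max_ge[OF f] assms by (auto simp: W_Suc)
next
  case False thus ?thesis using gopt[OF assms(1)] assms by auto
qed

lemma W_le: assumes "j < k" "b \<in> A j" "j \<noteq> d \<or> b = gopt d n a j"
  shows "W d (Suc n) a j \<le> sv d n a j b"
proof (cases "j \<noteq> d")
  case True
  have f: "finite (sv d n a j ` A j)" using finA assms by auto
  show ?thesis using True Min_le[OF f] assms by (auto simp: W_Suc)
next
  case False thus ?thesis using gopt[OF assms(1)] assms by auto
qed

lemma W_bound: "valid_vec k A a \<Longrightarrow> j < k \<Longrightarrow> d < k \<Longrightarrow> \<bar>W d n a j\<bar> \<le> n"
proof (induction n arbitrary: a j)
  case 0 then show ?case by simp
next
  case (Suc n)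
  have sb: "\<And>b. b \<in> A j \<Longrightarrow> \<bar>sv d n a j b\<bar> \<le> Suc n"
  proof -
    fix b assume b: "b \<in> A j"
    have v: "valid_vec k A (a[j:=b])" using valid_upd Suc b by auto
    have "\<bar>u d (a[j:=b])\<bar> \<le> 1" using ub Suc v by auto
    moreover have "\<bar>W d n (a[j:=b]) (Suc j mod k)\<bar> \<le> n" using Suc.IH[OF v] Suc kpos by auto
    ultimately show "\<bar>sv d n a j b\<bar> \<le> Suc n" unfolding sv_def by simp
  qed
  obtain b where b: "b \<in> A j" "sv d n a j b = W d (Suc n) a j" using W_attained Suc by blast
  show ?case using sb[OF b(1)] b(2) by simp
qed

lemma Max_img_diff: assumes "finite S" "S \<noteq> {}" "\<And>b. b \<in> S \<Longrightarrow> f b \<le> g b + (e::real)"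
  shows "Max (f ` S) \<le> Max (g ` S) + e"
proof -
  have "Max (f ` S) \<in> f ` S" using Max_in[of "f ` S"] assms by auto
  then obtain b where "b \<in> S" "Max (f ` S) = f b" by auto
  moreover have "g b \<le> Max (g ` S)" using assms \<open>b \<in> S\<close> by auto
  ultimately show ?thesis using assms(3) by force
qed

lemma Min_img_diff: assumes "finite S" "S \<noteq> {}" "\<And>b. b \<in> S \<Longrightarrow> f b \<le> g b + (e::real)"
  shows "Min (f ` S) \<le> Min (g ` S) + e"
proof -
  have "Min (g ` S) \<in> g ` S" using Min_in[of "g ` S"] assms by auto
  then obtain b where "b \<in> S" "Min (g ` S) = g b" by auto
  moreover have "Min (f ` S) \<le> f b" using assms \<open>b \<in> S\<close> by auto
  ultimately show ?thesis using assms(3) by force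
qed

lemma dist_step: "l < k \<Longrightarrow> j < k \<Longrightarrow> l \<noteq> j \<Longrightarrow>
  (l + k - Suc j mod k) mod k = (l + k - j) mod k - 1"
proof (cases "Suc j = k")
  case True
  assume a: "l < k" "j < k" "l \<noteq> j"
  then have "l + 1 < k \<or> l + 1 = k" by auto
  with True a show ?thesis by auto
next
  case False
  assume a: "l < k" "j < k" "l \<noteq> j"
  then have sj: "Suc j mod k = Suc j" using False by auto
  show ?thesis
  proof (cases "l < j")
    case True
    then have "(l + k - Suc j) mod k = l + k - Suc j" "(l + k - j) mod k = l + k - j" using a by auto
    then show ?thesis using sj True by simp
  next
    case False
    then have lj: "j < l" using a by auto
    have e1: "(l + k - Suc j) = (l - Suc j) + k" "(l + k - j) = (l - j) + k" using lj by auto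
    have e2: "(l - Suc j) mod k = l - Suc j" "(l - j) mod k = l - j" using a by auto
    have "(l + k - Suc j) mod k = l - Suc j" using e1 e2 by (metis mod_add_self2)
    moreover have "(l + k - j) mod k = l - j" using e1 e2 by (metis mod_add_self2)
    ultimately show ?thesis using sj lj by simp
  qed
qed

lemma W_spread_gen:
  "valid_vec k A a \<Longrightarrow> valid_vec k A a' \<Longrightarrow> j < k \<Longrightarrow> d < k \<Longrightarrow>
   (\<forall>l<k. a!l \<noteq> a'!l \<longrightarrow> (l + k - j) mod k < c) \<Longrightarrow> W d n a j \<le> W d n a' j + 2 * c"
proof (induction n arbitrary: a a' j c)
  case 0 then show ?case by simp
next
  case (Suc n)
  show ?case
  proof (cases c)
    case 0
    then have "a = a'" using Suc.prems by (auto simp: valid_vec_def intro: nth_equalityI)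
    then show ?thesis by simp
  next
    case (Suc c')
    have step: "sv d n a j b \<le> sv d n a' j b + 2 * c" if b: "b \<in> A j" for b
    proof -
      have v: "valid_vec k A (a[j:=b])" "valid_vec k A (a'[j:=b])" using valid_upd Suc.prems b by auto
      have len: "length a = k" "length a' = k" using Suc.prems by (auto simp: valid_vec_def)
      have "\<forall>l<k. (a[j:=b])!l \<noteq> (a'[j:=b])!l \<longrightarrow> (l + k - Suc j mod k) mod k < c'"
      proof (intro allI impI)
        fix l assume l: "l < k" "(a[j:=b])!l \<noteq> (a'[j:=b])!l"
        then have lj: "l \<noteq> j" "a!l \<noteq> a'!l" using len Suc.prems by (auto simp: nth_list_update split: if_splits)
        then have "(l + k - j) mod k < c" using Suc.prems l by auto
        moreover have "(l + k - j) mod k \<noteq> 0"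
        proof
          assume "(l + k - j) mod k = 0"
          moreover have "l + k - j = (if j \<le> l then (l - j) + k else l + (k - j))" using Suc.prems(3) by auto
          ultimately show False
          proof (cases "j \<le> l")
            case True
            then have "(l + k - j) mod k = l - j" using l by (metis add.commute le_add_diff_inverse2 less_imp_diff_less mod_add_self1 mod_less \<open>l + k - j = _\<close>)
            then show False using \<open>(l + k - j) mod k = 0\<close> True lj by simp
          next
            case False
            then have "l + k - j < k" "0 < l + k - j" using Suc.prems(3) by auto
            then show False using \<open>(l + k - j) mod k = 0\<close> by simp
          qed
        qed
        ultimately show "(l + k - Suc j mod k) mod k < c'" using dist_step[OF l(1) Suc.prems(3) lj(1)] \<open>c = Suc c'\<close> by auto
      qed
      then have "W d n (a[j:=b]) (Suc j mod k) \<le> W d n (a'[j:=b]) (Suc j mod k) + 2 * c'"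
        using Suc.IH[OF v] Suc.prems kpos by auto
      moreover have "u d (a[j:=b]) \<le> u d (a'[j:=b]) + 2" using ub[OF Suc.prems(4) v(1)] ub[OF Suc.prems(4) v(2)] by linarith
      ultimately show ?thesis unfolding sv_def using \<open>c = Suc c'\<close> by simp
    qed
    have f: "finite (A j)" "A j \<noteq> {}" using finA neA Suc.prems by auto
    have m1: "Max (sv d n a j ` A j) \<le> Max (sv d n a' j ` A j) + 2 * c"
      by (rule Max_img_diff[OF f]) (rule step)
    have m2: "Min (sv d n a j ` A j) \<le> Min (sv d n a' j ` A j) + 2 * c"
      by (rule Min_img_diff[OF f]) (rule step)
    show ?thesis using m1 m2 unfolding W_Suc by (cases "j = d") auto
  qed
qed

lemma W_spread: "valid_vec k A a \<Longrightarrow> valid_vec k A a' \<Longrightarrow> j < k \<Longrightarrow> d < k \<Longrightarrow>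
   W d n a j \<le> W d n a' j + 2 * k"
  by (rule W_spread_gen) auto

end

lemma av_take: "0 < s \<Longrightarrow> s \<le> n \<Longrightarrow> action_vec k (take n h) s = action_vec k h s"
  unfolding action_vec_def by (auto intro!: map_cong nth_take)

lemma av_len[simp]: "length (action_vec k h s) = k"
  by (simp add: action_vec_def)

lemma av_nth: "l < k \<Longrightarrow> action_vec k h s ! l = h ! (s - (s - l) mod k - 1)"
  by (simp add: action_vec_def)

lemma mod_eq0_imp: fixes x :: nat assumes "l < k" "l \<le> x" "(x - l) mod k = 0" shows "x mod k = l"
proof -
  have "x = (x - l) + l" using assms by simp
  then have "x mod k = ((x - l) mod k + l) mod k" by (metis mod_add_left_eq)
  then show ?thesis using assms by simp
qed

lemma av_step: assumes "0 < k" "k \<le> s"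
  shows "action_vec k h (Suc s) = (action_vec k h s)[Suc s mod k := h ! s]"
proof (rule nth_equalityI)
  show "length (action_vec k h (Suc s)) = length ((action_vec k h s)[Suc s mod k := h ! s])" by simp
next
  fix l assume "l < length (action_vec k h (Suc s))"
  then have l: "l < k" by simp
  have ls: "l \<le> s" using l assms by simp
  show "action_vec k h (Suc s) ! l = (action_vec k h s)[Suc s mod k := h ! s] ! l"
  proof (cases "l = Suc s mod k")
    case True
    have "(Suc s - l) mod k = 0"
      using True by (simp add: minus_mod_eq_mult_div)
    then show ?thesis using True l by (simp add: av_nth)
  next
    case False
    have e: "Suc s - l = Suc (s - l)" using ls by simp
    have ne: "(Suc s - l) mod k \<noteq> 0"
    proof
      assume "(Suc s - l) mod k = 0"
      then have "Suc s mod k = l" using mod_eq0_imp[OF l] ls by simp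
      then show False using False by simp
    qed
    then have "(Suc s - l) mod k = Suc ((s - l) mod k)"
      unfolding e by (metis mod_Suc)
    then show ?thesis using False l by (simp add: av_nth nth_list_update)
  qed
qed

lemma av_idx: assumes "0 < k" "k \<le> s" "l < k"
  shows "s - (s - l) mod k - 1 < s" "Suc (s - (s - l) mod k - 1) mod k = l"
proof -
  have x: "(s - l) mod k < k" using assms by simp
  then show "s - (s - l) mod k - 1 < s" using assms by linarith
  have "Suc (s - (s - l) mod k - 1) = s - (s - l) mod k" using x assms by linarith
  also have "\<dots> = l + ((s - l) - (s - l) mod k)" using assms x mod_less_eq_dividend[of "s - l" k] by linarith
  also have "\<dots> = l + k * ((s - l) div k)" by (simp add: minus_mod_eq_mult_div)
  finally show "Suc (s - (s - l) mod k - 1) mod k = l" using assms by simp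
qed

lemma av_valid: assumes "0 < k" "k \<le> s" "\<And>j. j < s \<Longrightarrow> h ! j \<in> A (Suc j mod k)"
  shows "valid_vec k A (action_vec k h s)"
  unfolding valid_vec_def
proof (intro conjI allI impI)
  fix l assume l: "l < k"
  show "action_vec k h s ! l \<in> A l"
    using assms(3)[OF av_idx(1)[OF assms(1,2) l]] av_idx(2)[OF assms(1,2) l] l by (simp add: av_nth)
qed simp

lemma liminf_diff0:
  fixes x y :: "nat \<Rightarrow> real"
  assumes "(\<lambda>t. x t - y t) \<longlonglongrightarrow> 0"
  shows "liminf (\<lambda>t. ereal (x t)) = liminf (\<lambda>t. ereal (y t))"
proof -
  have "(\<lambda>t. ereal (x t - y t)) \<longlonglongrightarrow> ereal 0" using assms by (simp add: tendsto_ereal)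
  then have "liminf (\<lambda>t. ereal (x t - y t) + ereal (y t)) = ereal 0 + liminf (\<lambda>t. ereal (y t))"
    by (rule ereal_liminf_lim_add) (simp only: abs_ereal.simps ereal_infty_less; simp)
  moreover have "(\<lambda>t. ereal (x t - y t) + ereal (y t)) = (\<lambda>t. ereal (x t))" by (rule ext) simp
  ultimately show ?thesis by (simp only: zero_ereal_def[symmetric] add_0_left)
qed

lemma avg_bdiff:
  fixes a b :: "nat \<Rightarrow> real"
  assumes "\<And>t. \<bar>(\<Sum>s=1..t. a s) - (\<Sum>s=1..t. b s)\<bar> \<le> C"
  shows "liminf (\<lambda>t. ereal ((\<Sum>s=1..t. a s) / real t)) = liminf (\<lambda>t. ereal ((\<Sum>s=1..t. b s) / real t))"
proof (rule liminf_diff0)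
  have lim: "(\<lambda>t. C / real t) \<longlonglongrightarrow> 0" by (rule lim_const_over_n)
  have ev: "\<forall>\<^sub>F t in sequentially. norm ((\<Sum>s=1..t. a s) / real t - (\<Sum>s=1..t. b s) / real t) \<le> C / real t"
  proof (rule eventually_sequentiallyI[of 1])
    fix t :: nat assume "1 \<le> t"
    then have "norm ((\<Sum>s=1..t. a s) / real t - (\<Sum>s=1..t. b s) / real t)
       = \<bar>(\<Sum>s=1..t. a s) - (\<Sum>s=1..t. b s)\<bar> / real t" by (simp add: diff_divide_distrib[symmetric])
    also have "\<dots> \<le> C / real t" using assms[of t] by (simp add: divide_right_mono)
    finally show "norm ((\<Sum>s=1..t. a s) / real t - (\<Sum>s=1..t. b s) / real t) \<le> C / real t" .
  qed
  show "(\<lambda>t. (\<Sum>s=1..t. a s) / real t - (\<Sum>s=1..t. b s) / real t) \<longlonglongrightarrow> 0"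
    by (rule Lim_null_comparison[OF ev lim])
qed

lemma sum_shift1: "(\<Sum>s=1..t. g (Suc s)) = (\<Sum>s=1..t. g s) + g (Suc t) - (g 1 :: real)"
  by (induction t) (auto simp: sum.cl_ivl_Suc)

lemma sum_shift_bound:
  fixes b :: "nat \<Rightarrow> real"
  assumes "\<And>s. \<bar>b s\<bar> \<le> B"
  shows "\<bar>(\<Sum>s=1..t. b (s + m)) - (\<Sum>s=1..t. b s)\<bar> \<le> 2 * B * m"
proof (induction m)
  case 0 then show ?case by simp
next
  case (Suc m)
  have "(\<Sum>s=1..t. b (s + Suc m)) = (\<Sum>s=1..t. b (Suc s + m))" by simp
  also have "\<dots> = (\<Sum>s=1..t. b (s + m)) + b (Suc t + m) - b (1 + m)"
    using sum_shift1[of "\<lambda>s. b (s + m)" t] by simp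
  finally have "(\<Sum>s=1..t. b (s + Suc m)) = (\<Sum>s=1..t. b (s + m)) + b (Suc t + m) - b (1 + m)" .
  moreover have "\<bar>b (Suc t + m)\<bar> \<le> B" "\<bar>b (1 + m)\<bar> \<le> B" using assms by auto
  ultimately show ?case using Suc.IH by (simp add: algebra_simps)
qed

lemma liminf_avg_shift:
  fixes b :: "nat \<Rightarrow> real"
  assumes "\<And>s. \<bar>b s\<bar> \<le> B"
  shows "liminf (\<lambda>t. ereal ((\<Sum>s=1..t. b (s + m)) / real t)) = liminf (\<lambda>t. ereal ((\<Sum>s=1..t. b s) / real t))"
  by (rule avg_bdiff[OF sum_shift_bound[OF assms]])

primrec ph :: "nat \<Rightarrow> (nat \<Rightarrow> 'a list \<Rightarrow> 'a) \<Rightarrow> nat \<Rightarrow> 'a list" where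
  "ph k f 0 = []"
| "ph k f (Suc n) = ph k f n @ [f (mover k (Suc n)) (ph k f n)]"

lemma ph_len[simp]: "length (ph k f n) = n"
  by (induction n) auto

lemma hist_pure: "hist_dist k (pure_profile f) n = return_pmf (ph k f n)"
  by (induction n) (auto simp: pure_profile_def bind_return_pmf)

lemma ph_take: "m \<le> n \<Longrightarrow> take m (ph k f n) = ph k f m"
proof (induction n)
  case 0 then show ?case by simp
next
  case (Suc n)
  then show ?case by (cases "m = Suc n") auto
qed

lemma ph_nth: "j < n \<Longrightarrow> ph k f n ! j = f (mover k (Suc j)) (ph k f j)"
proof (induction n)
  case 0 then show ?case by simp
next
  case (Suc n)
  then show ?case by (cases "j = n") (auto simp: nth_append)
qed

lemma stage_ph: "1 \<le> s \<Longrightarrow> s \<le> t \<Longrightarrow> stage_util k u i (ph k f t) s = stage_util k u i (ph k f s) s"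
  unfolding stage_util_def using av_take[where s=s and n=s and h="ph k f t" and k=k] ph_take[of s t k f] by auto

lemma gu_pure: "game_utility k u (pure_profile f) i =
   liminf (\<lambda>t. ereal ((\<Sum>s=1..t. stage_util k u i (ph k f s) s) / real t))"
proof -
  have "\<And>t. (\<Sum>s=1..t. stage_util k u i (ph k f t) s) = (\<Sum>s=1..t. stage_util k u i (ph k f s) s)"
    by (rule sum.cong[OF refl], rule stage_ph) auto
  then show ?thesis unfolding game_utility_def hist_pure by simp
qed

context G begin

lemma mover_lt: "mover k n < k" using kpos by (simp add: mover_def)

lemma ph_valid: "valid_pure k A f \<Longrightarrow> j < n \<Longrightarrow> ph k f n ! j \<in> A (Suc j mod k)"
  using ph_nth[of j n k f] mover_lt unfolding valid_pure_def mover_def by auto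

lemma stage_bound: "valid_pure k A f \<Longrightarrow> i < k \<Longrightarrow> \<bar>stage_util k u i (ph k f s) s\<bar> \<le> 1"
  unfolding stage_util_def
  using ub av_valid[OF kpos, of s "ph k f s" A] ph_valid[of f _ s] by auto

lemma dir1:
  assumes vf: "valid_pure k A f" and gu: "\<forall>i<k. game_utility k u (pure_profile f) i = ereal (t i)"
  shows "\<exists>p. is_inf_path k A p \<and> (\<forall>i<k. mean_payoff u p i = ereal (t i))"
proof -
  define p where "p n = (action_vec k (ph k f (n+k)) (n+k), Suc (n+k) mod k)" for n
  have vtx: "is_vertex k A (p n)" for n
    unfolding is_vertex_def p_def using av_valid[OF kpos, of "n+k" "ph k f (n+k)" A] ph_valid[OF vf] kpos by auto
  have edge: "is_edge k (p n) (p (Suc n))" for n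
  proof -
    have e1: "action_vec k (ph k f (Suc (n+k))) (n+k) = action_vec k (ph k f (n+k)) (n+k)"
      using av_take[of "n+k" "n+k" k "ph k f (Suc (n+k))"] ph_take[of "n+k" "Suc (n+k)" k f] kpos by simp
    have e2: "action_vec k (ph k f (Suc (n+k))) (Suc (n+k)) =
       (action_vec k (ph k f (Suc (n+k))) (n+k))[Suc (n+k) mod k := ph k f (Suc (n+k)) ! (n+k)]"
      by (rule av_step[OF kpos]) simp
    show ?thesis unfolding is_edge_def p_def using e1 e2 by (auto simp: mod_Suc_eq)
  qed
  have mp: "mean_payoff u p i = ereal (t i)" if i: "i < k" for i
  proof -
    have c: "stage_util k u i (ph k f (s + k)) (s + k) = u i (fst (p s))" if "1 \<le> s" for s
      using that unfolding stage_util_def p_def by (simp add: add.commute)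
    have "mean_payoff u p i = liminf (\<lambda>t. ereal ((\<Sum>s=1..t. stage_util k u i (ph k f (s + k)) (s + k)) / real t))"
      unfolding mean_payoff_def using c by simp
    also have "\<dots> = liminf (\<lambda>t. ereal ((\<Sum>s=1..t. stage_util k u i (ph k f s) s) / real t))"
      by (rule liminf_avg_shift[where b = "\<lambda>s. stage_util k u i (ph k f s) s" and B=1]) (rule stage_bound[OF vf i])
    also have "\<dots> = ereal (t i)" using gu i gu_pure by metis
    finally show ?thesis .
  qed
  show ?thesis using vtx edge mp unfolding is_inf_path_def by blast
qed

end

lemma tele:
  fixes x P e :: "nat \<Rightarrow> real"
  assumes "\<And>r. r0 \<le> r \<Longrightarrow> r \<le> t \<Longrightarrow> x r \<le> P r - P (Suc r) + e r" "r0 \<le> Suc t"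
  shows "(\<Sum>r=r0..t. x r) \<le> P r0 - P (Suc t) + (\<Sum>r=r0..t. e r)"
  using assms
proof (induction t)
  case 0
  then show ?case by (cases r0) auto
next
  case (Suc t)
  show ?case
  proof (cases "r0 = Suc (Suc t)")
    case True then show ?thesis by simp
  next
    case False
    then have r0: "r0 \<le> Suc t" using Suc.prems by simp
    have "(\<Sum>r=r0..Suc t. x r) = (\<Sum>r=r0..t. x r) + x (Suc t)" using r0 by (simp add: sum.cl_ivl_Suc)
    moreover have "(\<Sum>r=r0..Suc t. e r) = (\<Sum>r=r0..t. e r) + e (Suc t)" using r0 by (simp add: sum.cl_ivl_Suc)
    moreover have "(\<Sum>r=r0..t. x r) \<le> P r0 - P (Suc t) + (\<Sum>r=r0..t. e r)"
      using Suc.IH Suc.prems r0 by auto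
    moreover have "x (Suc t) \<le> P (Suc t) - P (Suc (Suc t)) + e (Suc t)" using Suc.prems r0 by auto
    ultimately show ?thesis by simp
  qed
qed

context G begin

definition Psi :: "nat \<Rightarrow> real \<Rightarrow> (nat \<Rightarrow> nat) \<Rightarrow> 'a list \<Rightarrow> nat \<Rightarrow> real" where
  "Psi d c \<rho> h r = W d (\<rho> r) (action_vec k h (r - 1)) (r mod k) - real (\<rho> r) * c"

definition hvalid :: "'a list \<Rightarrow> bool" where
  "hvalid h \<longleftrightarrow> (\<forall>j<length h. h ! j \<in> A (Suc j mod k))"

lemma step_common:
  assumes hv: "hvalid h" and r: "Suc k \<le> r" "r \<le> length h"
  shows "valid_vec k A (action_vec k h (r - 1))"
        "action_vec k h r = (action_vec k h (r - 1))[r mod k := h ! (r - 1)]"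
        "h ! (r - 1) \<in> A (r mod k)" "r mod k < k" "Suc (r mod k) mod k = Suc r mod k"
proof -
  show "valid_vec k A (action_vec k h (r - 1))"
    by (rule av_valid[OF kpos]) (use r hv in \<open>auto simp: hvalid_def\<close>)
  have "Suc (r - 1) = r" using r by simp
  then show "action_vec k h r = (action_vec k h (r - 1))[r mod k := h ! (r - 1)]"
    using av_step[OF kpos, of "r - 1" h] r by simp
  show "h ! (r - 1) \<in> A (r mod k)" using hv r unfolding hvalid_def
    by (metis Suc_diff_1 Suc_le_lessD diff_less gr_zeroI le_less_trans not_less_zero zero_less_one)
  show "r mod k < k" using kpos by simp
  show "Suc (r mod k) mod k = Suc r mod k" by (simp add: mod_Suc_eq)
qed

lemma step_le:
  assumes hv: "hvalid h" and r: "Suc k \<le> r" "r \<le> length h" and d: "d < k"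
    and rho: "1 \<le> \<rho> r" "1 < \<rho> r \<Longrightarrow> \<rho> (Suc r) = \<rho> r - 1"
    and ch: "r mod k = d \<or> h ! (r - 1) = gopt d (\<rho> r - 1) (action_vec k h (r - 1)) (r mod k)"
  shows "u d (action_vec k h r) - c \<le> Psi d c \<rho> h r - Psi d c \<rho> h (Suc r)
          + (if \<rho> r = 1 then Psi d c \<rho> h (Suc r) else 0)"
proof -
  note sc = step_common[OF hv r]
  obtain m where m: "\<rho> r = Suc m" using rho(1) by (cases "\<rho> r") auto
  have "sv d m (action_vec k h (r - 1)) (r mod k) (h ! (r - 1)) \<le> W d (Suc m) (action_vec k h (r - 1)) (r mod k)"
    by (rule W_ge) (use sc ch m in auto)
  then have ineq: "u d (action_vec k h r) + W d m (action_vec k h r) (Suc r mod k) \<le> W d (Suc m) (action_vec k h (r - 1)) (r mod k)"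
    unfolding sv_def using sc by simp
  show ?thesis
  proof (cases "m = 0")
    case True
    then show ?thesis using ineq m unfolding Psi_def by simp
  next
    case False
    then have "\<rho> (Suc r) = m" using rho m by simp
    then show ?thesis using ineq m False unfolding Psi_def by (simp add: algebra_simps)
  qed
qed

lemma step_ge:
  assumes hv: "hvalid h" and r: "Suc k \<le> r" "r \<le> length h" and d: "d < k"
    and rho: "1 \<le> \<rho> r" "1 < \<rho> r \<Longrightarrow> \<rho> (Suc r) = \<rho> r - 1"
    and ch: "r mod k \<noteq> d \<or> h ! (r - 1) = gopt d (\<rho> r - 1) (action_vec k h (r - 1)) (r mod k)"
  shows "u d (action_vec k h r) - c \<ge> Psi d c \<rho> h r - Psi d c \<rho> h (Suc r)
          + (if \<rho> r = 1 then Psi d c \<rho> h (Suc r) else 0)"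
proof -
  note sc = step_common[OF hv r]
  obtain m where m: "\<rho> r = Suc m" using rho(1) by (cases "\<rho> r") auto
  have "W d (Suc m) (action_vec k h (r - 1)) (r mod k) \<le> sv d m (action_vec k h (r - 1)) (r mod k) (h ! (r - 1))"
    by (rule W_le) (use sc ch m in auto)
  then have ineq: "W d (Suc m) (action_vec k h (r - 1)) (r mod k) \<le> u d (action_vec k h r) + W d m (action_vec k h r) (Suc r mod k)"
    unfolding sv_def using sc by simp
  show ?thesis
  proof (cases "m = 0")
    case True
    then show ?thesis using ineq m unfolding Psi_def by simp
  next
    case False
    then have "\<rho> (Suc r) = m" using rho m by simp
    then show ?thesis using ineq m False unfolding Psi_def by (simp add: algebra_simps)
  qed
qed

lemma Psi_bound: assumes "hvalid h" "Suc k \<le> r" "r \<le> Suc (length h)" "d < k"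
  shows "\<bar>Psi d c \<rho> h r\<bar> \<le> real (\<rho> r) * (1 + \<bar>c\<bar>)"
proof -
  have "valid_vec k A (action_vec k h (r - 1))"
    by (rule av_valid[OF kpos]) (use assms in \<open>auto simp: hvalid_def\<close>)
  then have "\<bar>W d (\<rho> r) (action_vec k h (r - 1)) (r mod k)\<bar> \<le> \<rho> r" using W_bound assms kpos by auto
  moreover have "\<bar>real (\<rho> r) * c\<bar> = real (\<rho> r) * \<bar>c\<bar>" by (simp add: abs_mult)
  ultimately show ?thesis unfolding Psi_def by (simp add: algebra_simps)
qed

end

lemma liminf_ge_c:
  fixes x :: "nat \<Rightarrow> real"
  assumes "\<And>T. N \<le> T \<Longrightarrow> c - K / real T \<le> x T"
  shows "ereal c \<le> liminf (\<lambda>T. ereal (x T))"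
proof -
  have "(\<lambda>T. c - K / real T) \<longlonglongrightarrow> c - 0"
    by (intro tendsto_diff tendsto_const lim_const_over_n)
  then have "(\<lambda>T. ereal (c - K / real T)) \<longlonglongrightarrow> ereal c" by (simp add: tendsto_ereal)
  then have "liminf (\<lambda>T. ereal (c - K / real T)) = ereal c"
    using lim_imp_Liminf by (metis sequentially_bot)
  moreover have "liminf (\<lambda>T. ereal (c - K / real T)) \<le> liminf (\<lambda>T. ereal (x T))"
    by (rule Liminf_mono) (use assms in \<open>auto intro!: eventually_sequentiallyI[of N]\<close>)
  ultimately show ?thesis by simp
qed

context G begin

definition astar :: "'a list" where "astar = map (\<lambda>l. SOME b. b \<in> A l) [0..<k]"

lemma astar_valid: "valid_vec k A astar"
  unfolding valid_vec_def astar_def using neA by (auto simp: some_in_eq)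

definition rhom :: "nat \<Rightarrow> nat \<Rightarrow> nat" where "rhom L r = L - (r - Suc k) mod L"

lemma rhom_props: assumes "0 < L" "Suc k \<le> r"
  shows "1 \<le> rhom L r" "1 < rhom L r \<Longrightarrow> rhom L (Suc r) = rhom L r - 1"
        "rhom L r = 1 \<Longrightarrow> rhom L (Suc r) = L \<and> (Suc r - Suc k) mod L = 0"
proof -
  have x: "(r - Suc k) mod L < L" using assms by simp
  then show "1 \<le> rhom L r" unfolding rhom_def by simp
  have e: "Suc r - Suc k = Suc (r - Suc k)" using assms by simp
  show "1 < rhom L r \<Longrightarrow> rhom L (Suc r) = rhom L r - 1"
  proof -
    assume "1 < rhom L r"
    then have "Suc ((r - Suc k) mod L) \<noteq> L" unfolding rhom_def by simp
    then have "(Suc r - Suc k) mod L = Suc ((r - Suc k) mod L)" unfolding e by (simp add: mod_Suc)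
    then show ?thesis unfolding rhom_def by simp
  qed
  show "rhom L r = 1 \<Longrightarrow> rhom L (Suc r) = L \<and> (Suc r - Suc k) mod L = 0"
  proof -
    assume "rhom L r = 1"
    then have "Suc ((r - Suc k) mod L) = L" unfolding rhom_def using x by simp
    then have "(Suc r - Suc k) mod L = 0" unfolding e by (simp add: mod_Suc)
    then show ?thesis unfolding rhom_def by simp
  qed
qed

lemma block_mover: assumes "(Suc r - Suc k) mod (n * k) = 0" "Suc k \<le> Suc r"
  shows "Suc r mod k = Suc k mod k"
proof -
  have "(Suc r - Suc k) mod k = 0" using assms(1) by (metis mod_mod_cancel dvd_triv_right mod_0)
  then show ?thesis using assms(2) by (metis le_add_diff_inverse2 mod_add_left_eq add_0)
qed

definition gmax :: "nat \<Rightarrow> nat \<Rightarrow> 'a list \<Rightarrow> 'a" where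
  "gmax d L h = (if length h < k then (SOME b. b \<in> A d)
      else gopt d (rhom L (Suc (length h)) - 1) (action_vec k h (length h)) d)"

lemma gmax_in: "d < k \<Longrightarrow> gmax d L h \<in> A d"
  unfolding gmax_def using gopt(1) neA by (auto simp: some_in_eq)

lemma stage_sum: assumes "k \<le> T"
  shows "(\<Sum>s=1..T. stage_util k u i h s) = (\<Sum>r=Suc k..T. u i (action_vec k h r))"
proof -
  have "{1..T} = {1..k} \<union> {Suc k..T}" using assms kpos by auto
  then have "(\<Sum>s=1..T. stage_util k u i h s) = (\<Sum>s=1..k. stage_util k u i h s) + (\<Sum>s=Suc k..T. stage_util k u i h s)"
    by (simp add: sum.union_disjoint)
  also have "(\<Sum>s=1..k. stage_util k u i h s) = 0" by (simp add: stage_util_def)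
  also have "(\<Sum>s=Suc k..T. stage_util k u i h s) = (\<Sum>r=Suc k..T. u i (action_vec k h r))"
    by (rule sum.cong) (auto simp: stage_util_def)
  finally show ?thesis by simp
qed

lemma ph_hvalid: "valid_pure k A f \<Longrightarrow> hvalid (ph k f T)"
  unfolding hvalid_def using ph_valid by auto

lemma maxer_bound:
  assumes d: "d < k" and n: "0 < n" and vf: "valid_pure k A f"
  defines "L \<equiv> n * k"
  defines "c \<equiv> (W d L astar (Suc k mod k) - 2 * k) / L"
  shows "ereal c \<le> game_utility k u (pure_profile (f(d := gmax d L))) d"
proof -
  define F where "F = f(d := gmax d L)"
  have L0: "0 < L" unfolding L_def using n kpos by simp
  have vF: "valid_pure k A F" using vf gmax_in d unfolding valid_pure_def F_def by auto
  have Fd: "F d = gmax d L" unfolding F_def by simp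
  define K where "K = 2 * real L * (1 + \<bar>c\<bar>) + k * \<bar>c\<bar>"
  have main: "c - K / real T \<le> (\<Sum>s=1..T. stage_util k u d (ph k F s) s) / real T" if T: "Suc k \<le> T" for T
  proof -
    let ?h = "ph k F T"
    have hv: "hvalid ?h" by (rule ph_hvalid[OF vF])
    have st: "c - u d (action_vec k ?h r) \<le> (- Psi d c (rhom L) ?h r) - (- Psi d c (rhom L) ?h (Suc r)) + 0"
      if r: "Suc k \<le> r" "r \<le> T" for r
    proof -
      have ch: "r mod k \<noteq> d \<or> ?h ! (r - 1) = gopt d (rhom L r - 1) (action_vec k ?h (r - 1)) (r mod k)"
      proof (cases "r mod k = d")
        case True
        have "?h ! (r - 1) = F (mover k r) (ph k F (r - 1))"
          using ph_nth[of "r - 1" T k F] r by simp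
        also have "\<dots> = gmax d L (ph k F (r - 1))" using True Fd by (simp add: mover_def)
        also have "\<dots> = gopt d (rhom L r - 1) (action_vec k (ph k F (r - 1)) (r - 1)) d"
        proof -
          have "\<not> length (ph k F (r - 1)) < k" using r by simp
          then show ?thesis unfolding gmax_def using r by simp
        qed
        also have "action_vec k (ph k F (r - 1)) (r - 1) = action_vec k ?h (r - 1)"
          using av_take[of "r - 1" "r - 1" k ?h] ph_take[of "r - 1" T k F] r kpos by simp
        finally have F: "?h ! (r - 1) = gopt d (rhom L r - 1) (action_vec k ?h (r - 1)) d" .
        show ?thesis by (rule disjI2, subst True, rule F)
      qed simp
      note sg = step_ge[OF hv r(1) _ d rhom_props(1,2)[OF L0 r(1)] ch, of c] 
      have "0 \<le> (if rhom L r = 1 then Psi d c (rhom L) ?h (Suc r) else 0)"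
      proof (cases "rhom L r = 1")
        case True
        note rp = rhom_props(3)[OF L0 r(1) True]
        have mv: "Suc r mod k = Suc k mod k" using block_mover[of r n] rp r unfolding L_def by simp
        have va: "valid_vec k A (action_vec k ?h r)"
          by (rule av_valid[OF kpos]) (use r hv in \<open>auto simp: hvalid_def\<close>)
        have "W d L astar (Suc k mod k) \<le> W d L (action_vec k ?h r) (Suc k mod k) + 2 * k"
          by (rule W_spread[OF astar_valid va]) (use d kpos in auto)
        then have "0 \<le> W d L (action_vec k ?h r) (Suc k mod k) - real L * c"
          unfolding c_def using L0 by simp
        then show ?thesis using True rp mv unfolding Psi_def by simp
      qed simp
      then show ?thesis using sg r by simp
    qed
    have tl: "(\<Sum>r=Suc k..T. c - u d (action_vec k ?h r)) \<le> (- Psi d c (rhom L) ?h (Suc k)) - (- Psi d c (rhom L) ?h (Suc T)) + (\<Sum>r=Suc k..T. 0)"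
      by (rule tele) (use st T in auto)
    have b1: "\<bar>Psi d c (rhom L) ?h (Suc k)\<bar> \<le> real (rhom L (Suc k)) * (1 + \<bar>c\<bar>)"
      by (rule Psi_bound[OF hv]) (use T d in auto)
    have b2: "\<bar>Psi d c (rhom L) ?h (Suc T)\<bar> \<le> real (rhom L (Suc T)) * (1 + \<bar>c\<bar>)"
      by (rule Psi_bound[OF hv]) (use T d in auto)
    have rl: "real (rhom L x) \<le> L" for x unfolding rhom_def by simp
    have "real (rhom L (Suc k)) * (1 + \<bar>c\<bar>) \<le> L * (1 + \<bar>c\<bar>)" "real (rhom L (Suc T)) * (1 + \<bar>c\<bar>) \<le> L * (1 + \<bar>c\<bar>)"
      using rl by (auto intro!: mult_right_mono)
    then have "(\<Sum>r=Suc k..T. c - u d (action_vec k ?h r)) \<le> 2 * L * (1 + \<bar>c\<bar>)" using tl b1 b2 by simp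
    then have s1: "real (T - k) * c - 2 * L * (1 + \<bar>c\<bar>) \<le> (\<Sum>r=Suc k..T. u d (action_vec k ?h r))"
      by (simp add: sum_subtractf)
    have "(\<Sum>s=1..T. stage_util k u d (ph k F s) s) = (\<Sum>s=1..T. stage_util k u d ?h s)"
      by (rule sum.cong[OF refl], rule stage_ph[symmetric]) auto
    also have "\<dots> = (\<Sum>r=Suc k..T. u d (action_vec k ?h r))" by (rule stage_sum) (use T in auto)
    finally have eq: "(\<Sum>s=1..T. stage_util k u d (ph k F s) s) = (\<Sum>r=Suc k..T. u d (action_vec k ?h r))" .
    have "real (T - k) * c = T * c - k * c" using T by (simp add: of_nat_diff algebra_simps)
    moreover have "- (k * c) \<ge> - (k * \<bar>c\<bar>)" by (simp add: abs_ge_self mult_left_mono)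
    ultimately have "T * c - K \<le> (\<Sum>s=1..T. stage_util k u d (ph k F s) s)" using s1 eq unfolding K_def by linarith
    then have "(T * c - K) / T \<le> (\<Sum>s=1..T. stage_util k u d (ph k F s) s) / T"
      by (intro divide_right_mono) auto
    moreover have "(T * c - K) / T = c - K / T" using T by (simp add: field_simps)
    ultimately show ?thesis by simp
  qed
  show ?thesis unfolding gu_pure F_def[symmetric] by (rule liminf_ge_c[of "Suc k"]) (rule main)
qed

lemma nu_ge:
  assumes d: "d < k" and n: "0 < n"
  shows "ereal ((W d (n * k) astar (Suc k mod k) - 2 * k) / (n * k)) \<le> nu k A u d"
proof -
  have "ereal ((W d (n * k) astar (Suc k mod k) - 2 * k) / (n * k))
      \<le> (INF f\<in>{f. valid_pure k A f}. game_utility k u (pure_profile (f(d := gmax d (n*k)))) d)"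
    by (rule INF_greatest) (use maxer_bound[OF d n] in auto)
  also have "\<dots> \<le> nu k A u d" unfolding nu_def
    by (rule SUP_upper2[of "gmax d (n*k)"]) (use gmax_in d in auto)
  finally show ?thesis .
qed

lemma W_upper:
  assumes d: "d < k" and n: "0 < n" and nt: "nu k A u d \<le> ereal td" and va: "valid_vec k A a"
  shows "W d (n * k) a (Suc k mod k) \<le> real (n * k) * td + 4 * k"
proof -
  have L0: "0 < real (n * k)" using n kpos by simp
  have "(W d (n * k) astar (Suc k mod k) - 2 * k) / (n * k) \<le> td"
    using nu_ge[OF d n] nt by (metis ereal_less_eq(3) order_trans)
  then have "W d (n * k) astar (Suc k mod k) - 2 * k \<le> real (n * k) * td"
    using L0 by (simp add: divide_le_eq mult.commute)
  moreover have "W d (n * k) a (Suc k mod k) \<le> W d (n * k) astar (Suc k mod k) + 2 * k"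
    by (rule W_spread[OF va astar_valid]) (use d kpos in auto)
  ultimately show ?thesis by simp
qed

end

context G begin

primrec bs :: "nat \<Rightarrow> nat" where
  "bs 0 = Suc k"
| "bs (Suc j) = bs j + k * Suc j"

lemma bs_smono: "strict_mono bs"
  by (rule strict_monoI_Suc) (use kpos in simp)

lemma bs_sq: "j * j \<le> 2 * bs j"
proof (induction j)
  case 0 then show ?case by simp
next
  case (Suc j)
  have "1 * Suc j \<le> k * Suc j" by (rule mult_le_mono1) (use kpos in simp)
  then show ?case using Suc by simp
qed

lemma bs_gt: "r < bs (Suc r)"
proof -
  have "Suc r * Suc r \<le> 2 * bs (Suc r)" by (rule bs_sq)
  moreover have "2 * r < Suc r * Suc r" by simp
  ultimately show ?thesis by linarith
qed

definition blk :: "nat \<Rightarrow> nat" where "blk r = (LEAST j. r < bs (Suc j))"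

lemma blk_char: assumes "bs j \<le> r" "r < bs (Suc j)" shows "blk r = j"
  unfolding blk_def
proof (rule Least_equality)
  show "r < bs (Suc j)" by fact
  fix y assume "r < bs (Suc y)"
  show "j \<le> y"
  proof (rule ccontr)
    assume "\<not> j \<le> y"
    then have "Suc y \<le> j" by simp
    then have "bs (Suc y) \<le> bs j" using strict_mono_less_eq[OF bs_smono, of "Suc y" j] by blast
    then show False using assms \<open>r < bs (Suc y)\<close> by simp
  qed
qed

lemma blk_bounds: assumes "Suc k \<le> r" shows "bs (blk r) \<le> r" "r < bs (Suc (blk r))"
proof -
  show "r < bs (Suc (blk r))" unfolding blk_def by (rule LeastI[of _ r]) (rule bs_gt)
  show "bs (blk r) \<le> r"
  proof (cases "blk r")
    case 0 then show ?thesis using assms by simp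
  next
    case (Suc j)
    have "\<not> r < bs (Suc j)"
    proof
      assume "r < bs (Suc j)"
      then have "blk r \<le> j" unfolding blk_def by (rule Least_le)
      then show False using Suc by simp
    qed
    then show ?thesis using Suc by simp
  qed
qed

lemma blk_sq: assumes "Suc k \<le> r" shows "blk r * blk r \<le> 2 * r"
  using bs_sq[of "blk r"] blk_bounds(1)[OF assms] by simp

definition rhop :: "nat \<Rightarrow> nat" where "rhop r = bs (Suc (blk r)) - r"

lemma rhop_props: assumes r: "Suc k \<le> r"
  shows "1 \<le> rhop r" "1 < rhop r \<Longrightarrow> rhop (Suc r) = rhop r - 1"
    "rhop r = 1 \<Longrightarrow> rhop (Suc r) = (Suc (Suc (blk r))) * k \<and> Suc r mod k = Suc k mod k"
    "rhop r \<le> k * Suc (blk r)"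
proof -
  note b = blk_bounds[OF r]
  show "1 \<le> rhop r" unfolding rhop_def using b by simp
  show "1 < rhop r \<Longrightarrow> rhop (Suc r) = rhop r - 1"
  proof -
    assume "1 < rhop r"
    then have "Suc r < bs (Suc (blk r))" unfolding rhop_def by simp
    then have "blk (Suc r) = blk r" using b by (intro blk_char) auto
    then show ?thesis unfolding rhop_def by simp
  qed
  show "rhop r = 1 \<Longrightarrow> rhop (Suc r) = (Suc (Suc (blk r))) * k \<and> Suc r mod k = Suc k mod k"
  proof -
    assume "rhop r = 1"
    then have e: "Suc r = bs (Suc (blk r))" unfolding rhop_def using b by simp
    have "bs (Suc (blk r)) < bs (Suc (Suc (blk r)))" using strict_mono_less[OF bs_smono, of "Suc (blk r)" "Suc (Suc (blk r))"] by blast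
    then have "Suc r < bs (Suc (Suc (blk r)))" unfolding e .
    then have "blk (Suc r) = Suc (blk r)" using e by (intro blk_char) auto
    then have "rhop (Suc r) = (Suc (Suc (blk r))) * k" unfolding rhop_def using e by simp
    moreover have "Suc r mod k = Suc k mod k"
    proof -
      have "bs y mod k = Suc k mod k" for y
      proof (induction y)
        case (Suc y)
        have "bs (Suc y) mod k = (bs y + k * Suc y) mod k" by simp
        also have "\<dots> = bs y mod k" by (metis mod_mult_self1 mult.commute)
        finally show ?case using Suc by simp
      qed simp
      then show ?thesis unfolding e by (simp only:)
    qed
    ultimately show ?thesis by simp
  qed
  show "rhop r \<le> k * Suc (blk r)" unfolding rhop_def using b by simp
qed

lemma blk_mono: "r \<le> r' \<Longrightarrow> Suc k \<le> r \<Longrightarrow> blk r \<le> blk r'"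
proof -
  assume a: "r \<le> r'" "Suc k \<le> r"
  have "r' < bs (Suc (blk r'))" using blk_bounds(2)[of r'] a by simp
  then have "bs (blk r) \<le> r'" "r < bs (Suc (blk r'))" using blk_bounds[of r] a by auto
  show "blk r \<le> blk r'"
  proof (rule ccontr)
    assume "\<not> blk r \<le> blk r'"
    then have "Suc (blk r') \<le> blk r" by simp
    then have "bs (Suc (blk r')) \<le> bs (blk r)" using strict_mono_less_eq[OF bs_smono, of "Suc (blk r')" "blk r"] by blast
    then show False using \<open>bs (blk r) \<le> r'\<close> \<open>r' < bs (Suc (blk r'))\<close> by simp
  qed
qed

end

locale G2 = G k A u for k :: nat and A :: "nat \<Rightarrow> 'a set" and u :: "nat \<Rightarrow> 'a list \<Rightarrow> real" +
  fixes p :: "nat \<Rightarrow> 'a list \<times> nat" and tt :: "nat \<Rightarrow> real"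
  assumes path: "is_inf_path k A p"
    and mpay: "\<And>i. i < k \<Longrightarrow> mean_payoff u p i = ereal (tt i)"
    and nut: "\<And>i. i < k \<Longrightarrow> nu k A u i \<le> ereal (tt i)"
begin

lemma p_vertex: "valid_vec k A (fst (p n))" "snd (p n) < k"
  using path unfolding is_inf_path_def is_vertex_def by auto

lemma p_edge: "snd (p (Suc n)) = Suc (snd (p n)) mod k" "\<And>l. l < k \<Longrightarrow> l \<noteq> snd (p n) \<Longrightarrow> fst (p (Suc n)) ! l = fst (p n) ! l"
  using path unfolding is_inf_path_def is_edge_def by auto

lemma snd_p: "snd (p n) = (snd (p 0) + n) mod k"
proof (induction n)
  case 0 then show ?case using p_vertex(2)[of 0] by simp
next
  case (Suc n) then show ?case using p_edge(1)[of n] by (simp add: mod_Suc_eq)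
qed

definition m0 :: nat where "m0 = Suc k - snd (p 0)"
definition q :: "nat \<Rightarrow> 'a list \<times> nat" where "q n = p (m0 + n)"

lemma snd_q: "snd (q n) = (Suc k + n) mod k"
proof -
  have "snd (p 0) + (m0 + n) = Suc k + n" unfolding m0_def using p_vertex(2)[of 0] by simp
  then show ?thesis unfolding q_def using snd_p[of "m0 + n"] by (simp add: add.assoc[symmetric])
qed

lemma q_valid: "valid_vec k A (fst (q n))" unfolding q_def by (rule p_vertex)

lemma q_step: "fst (q (Suc n)) = (fst (q n))[snd (q n) := fst (q (Suc n)) ! snd (q n)]"
proof (rule nth_equalityI)
  have l: "length (fst (q m)) = k" for m using q_valid[of m] by (simp add: valid_vec_def)
  show "length (fst (q (Suc n))) = length ((fst (q n))[snd (q n) := fst (q (Suc n)) ! snd (q n)])"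
    using l by simp
  fix l assume "l < length (fst (q (Suc n)))"
  then have lk: "l < k" using l by simp
  show "fst (q (Suc n)) ! l = (fst (q n))[snd (q n) := fst (q (Suc n)) ! snd (q n)] ! l"
  proof (cases "l = snd (q n)")
    case True then show ?thesis using lk \<open>length (fst (q n)) = k\<close> by simp
  next
    case False
    then show ?thesis using p_edge(2)[of l "m0 + n"] lk unfolding q_def by (simp add: nth_list_update)
  qed
qed

definition act :: "nat \<Rightarrow> 'a" where "act r = fst (q (r - k)) ! (r mod k)"

lemma act_in: "act r \<in> A (r mod k)"
  using q_valid[of "r - k"] kpos unfolding act_def valid_vec_def by simp

definition Hint :: "nat \<Rightarrow> 'a list" where "Hint t = map (\<lambda>j. act (Suc j)) [0..<t]"

lemma Hint_len[simp]: "length (Hint t) = t" by (simp add: Hint_def)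
lemma Hint_nth: "j < t \<Longrightarrow> Hint t ! j = act (Suc j)" by (simp add: Hint_def)

lemma av_Hint: assumes "k \<le> s" "s \<le> t" shows "action_vec k (Hint t) s = fst (q (s - k))"
  using assms
proof (induction s rule: dec_induct)
  case base
  show ?case
  proof (rule nth_equalityI)
    show "length (action_vec k (Hint t) k) = length (fst (q (k - k)))" using q_valid[of 0] by (simp add: valid_vec_def)
    fix l assume "l < length (action_vec k (Hint t) k)"
    then have lk: "l < k" by simp
    note ai = av_idx[OF kpos le_refl lk]
    have "action_vec k (Hint t) k ! l = act (Suc (k - (k - l) mod k - 1))"
      using av_nth[OF lk, of "Hint t" k] Hint_nth[of "k - (k - l) mod k - 1" t] ai(1) base by simp
    also have "\<dots> = fst (q 0) ! l" unfolding act_def using ai by simp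
    finally show "action_vec k (Hint t) k ! l = fst (q (k - k)) ! l" by simp
  qed
next
  case (step s)
  have "action_vec k (Hint t) (Suc s) = (action_vec k (Hint t) s)[Suc s mod k := Hint t ! s]"
    by (rule av_step[OF kpos step.hyps(1)])
  also have "\<dots> = (fst (q (s - k)))[Suc s mod k := act (Suc s)]" using step by (simp add: Hint_nth)
  also have "act (Suc s) = fst (q (Suc (s - k))) ! (Suc s mod k)" unfolding act_def using step.hyps(1)
    by (simp add: Suc_diff_le)
  also have "Suc s mod k = snd (q (s - k))" using snd_q[of "s - k"] step.hyps(1) by simp
  also have "(fst (q (s - k)))[snd (q (s - k)) := fst (q (Suc (s - k))) ! snd (q (s - k))] = fst (q (Suc (s - k)))"
    by (rule q_step[symmetric])
  finally show ?case using step.hyps(1) by (simp add: Suc_diff_le)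
qed

definition cons :: "'a list \<Rightarrow> bool" where "cons h \<longleftrightarrow> (\<forall>j<length h. h ! j = act (Suc j))"
definition fdev :: "'a list \<Rightarrow> nat" where "fdev h = (LEAST j. j < length h \<and> h ! j \<noteq> act (Suc j))"

definition pun :: "nat \<Rightarrow> nat \<Rightarrow> 'a list \<Rightarrow> 'a" where
  "pun d j h = (if length h < k then (SOME b. b \<in> A j)
      else gopt d (rhop (Suc (length h)) - 1) (action_vec k h (length h)) j)"

definition fq :: "nat \<Rightarrow> 'a list \<Rightarrow> 'a" where
  "fq j h = (if cons h then (if Suc (length h) mod k = j then act (Suc (length h)) else (SOME b. b \<in> A j))
     else pun (Suc (fdev h) mod k) j h)"

lemma fq_valid: "valid_pure k A fq"
  unfolding valid_pure_def fq_def pun_def using act_in gopt(1) neA by (auto simp: some_in_eq)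

lemma ph_fq: "ph k fq t = Hint t"
proof (induction t)
  case 0 then show ?case by (simp add: Hint_def)
next
  case (Suc t)
  have c: "cons (Hint t)" unfolding cons_def by (simp add: Hint_nth)
  have "fq (mover k (Suc t)) (Hint t) = act (Suc t)" unfolding fq_def using c by (simp add: mover_def)
  then show ?case using Suc by (simp add: Hint_def)
qed

lemma gu_fq: assumes i: "i < k" shows "game_utility k u (pure_profile fq) i = ereal (tt i)"
proof -
  define c where "c s = stage_util k u i (Hint s) s" for s
  define b where "b s = u i (fst (p s))" for s
  have cb: "\<bar>c s\<bar> \<le> 1" for s
    using stage_bound[OF fq_valid i, of s] unfolding c_def ph_fq .
  have bb: "\<bar>b s\<bar> \<le> 1" for s unfolding b_def using ub[OF i p_vertex(1)] .
  have ck: "c (s + k) = b (s + m0)" if "1 \<le> s" for s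
  proof -
    have "c (s + k) = u i (action_vec k (Hint (s + k)) (s + k))" unfolding c_def stage_util_def using that by simp
    also have "\<dots> = u i (fst (q s))" using av_Hint[of "s + k" "s + k"] by simp
    finally show ?thesis unfolding b_def q_def by (simp add: add.commute)
  qed
  have "game_utility k u (pure_profile fq) i = liminf (\<lambda>t. ereal ((\<Sum>s=1..t. c s) / real t))"
    unfolding gu_pure ph_fq c_def ..
  also have "\<dots> = liminf (\<lambda>t. ereal ((\<Sum>s=1..t. c (s + k)) / real t))"
    by (rule liminf_avg_shift[symmetric, OF cb])
  also have "\<dots> = liminf (\<lambda>t. ereal ((\<Sum>s=1..t. b (s + m0)) / real t))"
  proof -
    have "(\<Sum>s=1..t. c (s + k)) = (\<Sum>s=1..t. b (s + m0))" for t by (rule sum.cong) (auto simp: ck)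
    then show ?thesis by simp
  qed
  also have "\<dots> = liminf (\<lambda>t. ereal ((\<Sum>s=1..t. b s) / real t))"
    by (rule liminf_avg_shift[OF bb])
  also have "\<dots> = ereal (tt i)" using mpay[OF i] unfolding mean_payoff_def b_def by simp
  finally show ?thesis .
qed

lemma tt_bound: assumes i: "i < k" shows "\<bar>tt i\<bar> \<le> 1"
proof -
  have "\<bar>(\<Sum>s=1..t. u i (fst (p s))) / real t\<bar> \<le> 1" for t
  proof (cases "t = 0")
    case False
    have "\<bar>\<Sum>s=1..t. u i (fst (p s))\<bar> \<le> (\<Sum>s=1..t. \<bar>u i (fst (p s))\<bar>)" by (rule sum_abs)
    also have "\<dots> \<le> (\<Sum>s=1..t. 1)" by (rule sum_mono) (rule ub[OF i p_vertex(1)])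
    also have "\<dots> = real t" by simp
    finally have S: "\<bar>\<Sum>s=1..t. u i (fst (p s))\<bar> \<le> real t" .
    have "\<bar>(\<Sum>s=1..t. u i (fst (p s))) / real t\<bar> = \<bar>\<Sum>s=1..t. u i (fst (p s))\<bar> / real t"
      by (simp add: abs_divide)
    also have "\<dots> \<le> real t / real t" by (rule divide_right_mono[OF S]) simp
    also have "\<dots> = 1" using False by simp
    finally show ?thesis .
  qed simp
  note B = this
  have lh: "-1 \<le> (\<Sum>s=1..t. u i (fst (p s))) / real t \<and> (\<Sum>s=1..t. u i (fst (p s))) / real t \<le> 1" for t
    using B[of t] unfolding abs_le_iff by linarith
  have lo: "\<And>t. ereal (-1) \<le> ereal ((\<Sum>s=1..t. u i (fst (p s))) / real t)"
    and hi: "\<And>t. ereal ((\<Sum>s=1..t. u i (fst (p s))) / real t) \<le> ereal 1" using lh by auto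
  have "ereal (-1) \<le> mean_payoff u p i" unfolding mean_payoff_def
    by (rule Liminf_bounded) (use lo in auto)
  moreover have "mean_payoff u p i \<le> ereal 1" unfolding mean_payoff_def
    by (rule Liminf_le) (use hi in auto)
  ultimately show ?thesis using mpay[OF i] by simp
qed

end

lemma hist_len: "h \<in> set_pmf (hist_dist k \<sigma> n) \<Longrightarrow> length h = n"
  by (induction n arbitrary: h) auto

lemma hist_prefix: "map_pmf (take m) (hist_dist k \<sigma> (m + l)) = hist_dist k \<sigma> m"
proof (induction l)
  case 0
  have "map_pmf (take m) (hist_dist k \<sigma> m) = map_pmf id (hist_dist k \<sigma> m)"
    by (rule map_pmf_cong) (auto dest: hist_len)
  then show ?case by simp
next
  case (Suc l)
  have "map_pmf (take m) (hist_dist k \<sigma> (m + Suc l))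
      = bind_pmf (hist_dist k \<sigma> (m + l)) (\<lambda>h. map_pmf (\<lambda>a. take m (h @ [a])) (\<sigma> (mover k (Suc (m + l))) h))"
    by (simp add: map_bind_pmf map_pmf_comp)
  also have "\<dots> = bind_pmf (hist_dist k \<sigma> (m + l)) (\<lambda>h. return_pmf (take m h))"
  proof (rule bind_pmf_cong[OF refl])
    fix h assume "h \<in> set_pmf (hist_dist k \<sigma> (m + l))"
    then have "length h = m + l" by (rule hist_len)
    then have "\<And>a. take m (h @ [a]) = take m h" by simp
    then show "map_pmf (\<lambda>a. take m (h @ [a])) (\<sigma> (mover k (Suc (m + l))) h) = return_pmf (take m h)"
      by (simp add: map_pmf_const)
  qed
  also have "\<dots> = map_pmf (take m) (hist_dist k \<sigma> (m + l))" by (simp add: map_pmf_def)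
  finally show ?case using Suc by simp
qed

lemma stage_take: "1 \<le> s \<Longrightarrow> take s h = take s h' \<Longrightarrow> stage_util k u i h s = stage_util k u i h' s"
proof -
  assume a: "1 \<le> s" "take s h = take s h'"
  then have s0: "0 < s" by simp
  have "action_vec k h s = action_vec k h' s"
    using av_take[OF s0 le_refl, of k h] av_take[OF s0 le_refl, of k h'] a(2) by metis
  then show ?thesis unfolding stage_util_def by simp
qed

context G2 begin

definition sig :: "nat \<Rightarrow> ('a list \<Rightarrow> 'a pmf) \<Rightarrow> nat \<Rightarrow> 'a list \<Rightarrow> 'a pmf" where
  "sig i \<tau> = (pure_profile fq)(i := \<tau>)"

definition supp :: "nat \<Rightarrow> nat \<Rightarrow> 'a list \<Rightarrow> bool" where
  "supp i n h \<longleftrightarrow> length h = n \<and> hvalid h \<and> (\<forall>j<n. Suc j mod k \<noteq> i \<longrightarrow> h ! j = fq (Suc j mod k) (take j h))"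

lemma support: assumes i: "i < k" and tv: "valid_strat A i \<tau>"
  shows "h \<in> set_pmf (hist_dist k (sig i \<tau>) n) \<Longrightarrow> supp i n h"
proof (induction n arbitrary: h)
  case 0 then show ?case by (simp add: supp_def hvalid_def)
next
  case (Suc n)
  from Suc.prems obtain h0 a where h: "h = h0 @ [a]" and h0: "h0 \<in> set_pmf (hist_dist k (sig i \<tau>) n)"
    and a: "a \<in> set_pmf (sig i \<tau> (mover k (Suc n)) h0)" by auto
  have s0: "supp i n h0" by (rule Suc.IH[OF h0])
  have mv: "mover k (Suc n) = Suc n mod k" by (simp add: mover_def)
  have aA: "a \<in> A (Suc n mod k)" and af: "Suc n mod k \<noteq> i \<Longrightarrow> a = fq (Suc n mod k) h0"
  proof -
    show "a \<in> A (Suc n mod k)"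
    proof (cases "Suc n mod k = i")
      case True then show ?thesis using a tv mv unfolding sig_def valid_strat_def by auto
    next
      case False
      then have "a = fq (Suc n mod k) h0" using a mv unfolding sig_def pure_profile_def by auto
      then show ?thesis using fq_valid kpos unfolding valid_pure_def by simp
    qed
    show "Suc n mod k \<noteq> i \<Longrightarrow> a = fq (Suc n mod k) h0"
      using a mv unfolding sig_def pure_profile_def by auto
  qed
  have len: "length h0 = n" using s0 supp_def by simp
  show ?case unfolding supp_def
  proof (intro conjI allI impI)
    show "length h = Suc n" using h len by simp
    show "hvalid h" using s0 aA len unfolding supp_def hvalid_def h by (auto simp: nth_append less_Suc_eq)
    fix j assume j: "j < Suc n" "Suc j mod k \<noteq> i"
    show "h ! j = fq (Suc j mod k) (take j h)"
    proof (cases "j = n")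
      case True then show ?thesis using af j len h by (simp add: nth_append)
    next
      case False
      then have "j < n" using j by simp
      then show ?thesis using s0 j len unfolding supp_def h by (auto simp: nth_append)
    qed
  qed
qed

lemma finite_support: assumes i: "i < k" and tv: "valid_strat A i \<tau>"
  shows "finite (set_pmf (hist_dist k (sig i \<tau>) n))"
proof -
  let ?U = "\<Union>l<k. A l"
  have "finite ?U" using finA by auto
  then have fin: "finite {xs. set xs \<subseteq> ?U \<and> length xs = n}" by (rule finite_lists_length_eq)
  have "set_pmf (hist_dist k (sig i \<tau>) n) \<subseteq> {xs. set xs \<subseteq> ?U \<and> length xs = n}"
  proof
    fix h assume "h \<in> set_pmf (hist_dist k (sig i \<tau>) n)"
    then have s: "supp i n h" by (rule support[OF i tv])
    have "set h \<subseteq> ?U"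
    proof
      fix x assume "x \<in> set h"
      then obtain j where "j < length h" "h ! j = x" by (auto simp: in_set_conv_nth)
      then have "x \<in> A (Suc j mod k)" using s unfolding supp_def hvalid_def by auto
      then show "x \<in> ?U" using kpos by auto
    qed
    then show "h \<in> {xs. set xs \<subseteq> ?U \<and> length xs = n}" using s supp_def by simp
  qed
  then show ?thesis using fin finite_subset by blast
qed

end

context G2 begin

lemma blk_step: assumes r: "Suc k \<le> r"
  shows "rhop r = 1 \<Longrightarrow> blk (Suc r) = Suc (blk r)" "1 < rhop r \<Longrightarrow> blk (Suc r) = blk r"
proof -
  note b = blk_bounds[OF r]
  show "rhop r = 1 \<Longrightarrow> blk (Suc r) = Suc (blk r)"
  proof -
    assume "rhop r = 1"
    then have e: "Suc r = bs (Suc (blk r))" unfolding rhop_def using b by simp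
    have "bs (Suc (blk r)) < bs (Suc (Suc (blk r)))" using strict_mono_less[OF bs_smono, of "Suc (blk r)" "Suc (Suc (blk r))"] by blast
    then show ?thesis using e by (intro blk_char) auto
  qed
  show "1 < rhop r \<Longrightarrow> blk (Suc r) = blk r"
  proof -
    assume "1 < rhop r"
    then have "Suc r < bs (Suc (blk r))" unfolding rhop_def by simp
    then show ?thesis using b by (intro blk_char) auto
  qed
qed

definition Err :: "nat \<Rightarrow> real" where "Err T = 2 * (k + 1) + 12 * k * (blk (Suc T) + 1)"

lemma fdev_props: assumes "\<not> cons h"
  shows "fdev h < length h" "h ! fdev h \<noteq> act (Suc (fdev h))" "\<And>j. j < fdev h \<Longrightarrow> h ! j = act (Suc j)"
proof -
  have ex: "\<exists>j. j < length h \<and> h ! j \<noteq> act (Suc j)" using assms unfolding cons_def by auto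
  show "fdev h < length h" "h ! fdev h \<noteq> act (Suc (fdev h))"
    using LeastI_ex[OF ex] unfolding fdev_def by auto
  fix j assume j: "j < fdev h"
  show "h ! j = act (Suc j)"
  proof (rule ccontr)
    assume "h ! j \<noteq> act (Suc j)"
    then have "fdev h \<le> j" unfolding fdev_def using j \<open>fdev h < length h\<close> by (intro Least_le) simp
    then show False using j by simp
  qed
qed

lemma fdev_take: assumes "\<not> cons h" "fdev h < j" "j \<le> length h"
  shows "\<not> cons (take j h)" "fdev (take j h) = fdev h"
proof -
  note fp = fdev_props[OF assms(1)]
  have a1: "fdev h < length (take j h)" using fp assms by simp
  have a2: "take j h ! fdev h \<noteq> act (Suc (fdev h))" using fp assms by simp
  show nc: "\<not> cons (take j h)" unfolding cons_def using a1 a2 by blast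
  note fp2 = fdev_props[OF nc]
  show "fdev (take j h) = fdev h"
  proof (rule antisym)
    show "fdev (take j h) \<le> fdev h"
      unfolding fdev_def[of "take j h"] by (rule Least_le) (use a1 a2 in blast)
    show "fdev h \<le> fdev (take j h)"
    proof (rule ccontr)
      assume "\<not> fdev h \<le> fdev (take j h)"
      then have "h ! fdev (take j h) = act (Suc (fdev (take j h)))" using fp(3) by simp
      moreover have "take j h ! fdev (take j h) = h ! fdev (take j h)" using fp2(1) by simp
      ultimately show False using fp2(2) by simp
    qed
  qed
qed

lemma take_Hint: assumes "\<And>j. j < s \<Longrightarrow> h ! j = act (Suc j)" "s \<le> length h"
  shows "take s h = Hint s"
  by (rule nth_equalityI) (use assms in \<open>auto simp: Hint_nth\<close>)

lemma deviator: assumes i: "i < k" and s: "supp i T h" and nc: "\<not> cons h"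
  shows "Suc (fdev h) mod k = i"
proof (rule ccontr)
  assume ne: "Suc (fdev h) mod k \<noteq> i"
  note fp = fdev_props[OF nc]
  have len: "length h = T" using s supp_def by simp
  have "h ! fdev h = fq (Suc (fdev h) mod k) (take (fdev h) h)" using s ne fp(1) len unfolding supp_def by auto
  moreover have tH: "take (fdev h) h = Hint (fdev h)" by (rule take_Hint) (use fp in auto)
  moreover have "cons (Hint (fdev h))" unfolding cons_def by (simp add: Hint_nth)
  ultimately have "h ! fdev h = act (Suc (fdev h))" unfolding fq_def by simp
  then show False using fp(2) by simp
qed

definition cseq :: "nat \<Rightarrow> nat \<Rightarrow> real" where "cseq i s = stage_util k u i (Hint s) s"

definition Dv :: "nat \<Rightarrow> 'a list \<Rightarrow> nat" where "Dv T h = (if cons h then T else fdev h)"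

lemma prefix_part: assumes s: "supp i T h"
  shows "Dv T h \<le> T" "(\<Sum>s=1..Dv T h. stage_util k u i h s) = (\<Sum>s=1..Dv T h. cseq i s)"
proof -
  have len: "length h = T" using s supp_def by simp
  have agree: "h ! j = act (Suc j)" if j: "j < Dv T h" for j
  proof (cases "cons h")
    case True then show ?thesis using j len unfolding Dv_def cons_def by simp
  next
    case False then show ?thesis using j fdev_props(3)[OF False] unfolding Dv_def by simp
  qed
  show "Dv T h \<le> T" unfolding Dv_def using fdev_props(1)[of h] len by (cases "cons h") auto
  then show "(\<Sum>s=1..Dv T h. stage_util k u i h s) = (\<Sum>s=1..Dv T h. cseq i s)"
  proof (intro sum.cong refl)
    fix s assume "Dv T h \<le> T" "s \<in> {1..Dv T h}"
    then have s1: "1 \<le> s" "s \<le> Dv T h" by auto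
    have "take s h = Hint s" by (rule take_Hint) (use agree s1 len \<open>Dv T h \<le> T\<close> in auto)
    then have "take s h = take s (Hint s)" by simp
    then show "stage_util k u i h s = cseq i s" unfolding cseq_def by (rule stage_take[OF s1(1)])
  qed
qed

end

context G2 begin

lemma post_part: assumes i: "i < k" and s: "supp i T h" and nc: "\<not> cons h"
  shows "(\<Sum>r=Suc (fdev h)..T. stage_util k u i h r) \<le> real (T - fdev h) * tt i + Err T"
proof -
  define D where "D = fdev h"
  have len: "length h = T" using s supp_def by simp
  have DT: "D < T" using fdev_props(1)[OF nc] len D_def by simp
  have hv: "hvalid h" using s supp_def by simp
  have dev: "Suc D mod k = i" using deviator[OF i s nc] D_def by simp
  have ttb: "\<bar>tt i\<bar> \<le> 1" by (rule tt_bound[OF i])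
  define r0 where "r0 = max (D + 2) (Suc k)"
  define Q where "Q r = Psi i (tt i) rhop h r - 4 * k * real (blk r)" for r
  define P where "P r = (if r < r0 then Q r0 else Q r)" for r
  define e :: "nat \<Rightarrow> real" where "e r = (if r < r0 then 2 else 0)" for r
  define x where "x r = stage_util k u i h r - tt i" for r
  have stb: "stage_util k u i h r \<le> 1" if "r \<le> T" for r
  proof (cases "r \<le> k")
    case False
    have "valid_vec k A (action_vec k h r)"
      by (rule av_valid[OF kpos]) (use False that hv len in \<open>auto simp: hvalid_def\<close>)
    then show ?thesis using ub[OF i] False unfolding stage_util_def by (simp add: abs_le_iff)
  qed (simp add: stage_util_def)
  have step: "x r \<le> P r - P (Suc r) + e r" if r: "Suc D \<le> r" "r \<le> T" for r
  proof (cases "r < r0")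
    case True
    have o: "Suc r < r0 \<or> Suc r = r0" using True by auto
    have "P r = Q r0" "P (Suc r) = Q r0" unfolding P_def using True o by auto
    then show ?thesis using True stb[OF r(2)] ttb unfolding x_def e_def by (simp add: abs_le_iff)
  next
    case False
    then have rk: "Suc k \<le> r" and rD: "D + 2 \<le> r" unfolding r0_def by auto
    have PP: "P r = Q r" "P (Suc r) = Q (Suc r)" "e r = 0" unfolding P_def e_def using False by auto
    have st: "stage_util k u i h r = u i (action_vec k h r)" using rk unfolding stage_util_def by simp
    have ch: "r mod k = i \<or> h ! (r - 1) = gopt i (rhop r - 1) (action_vec k h (r - 1)) (r mod k)"
    proof (cases "r mod k = i")
      case False
      have j: "r - 1 < T" "Suc (r - 1) mod k \<noteq> i" using r rk False by auto
      then have "h ! (r - 1) = fq (r mod k) (take (r - 1) h)" using s rk unfolding supp_def by auto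
      moreover have "\<not> cons (take (r - 1) h)" "fdev (take (r - 1) h) = D"
        using fdev_take[OF nc, of "r - 1"] rD len r D_def by auto
      ultimately have "h ! (r - 1) = pun i (r mod k) (take (r - 1) h)" unfolding fq_def using dev by simp
      also have "\<dots> = gopt i (rhop r - 1) (action_vec k (take (r - 1) h) (r - 1)) (r mod k)"
      proof -
        have "\<not> length (take (r - 1) h) < k" "length (take (r - 1) h) = r - 1" using rk r len by auto
        then show ?thesis unfolding pun_def using rk by simp
      qed
      also have "action_vec k (take (r - 1) h) (r - 1) = action_vec k h (r - 1)"
        by (rule av_take) (use rk kpos in auto)
      finally show ?thesis by simp
    qed simp
    note sl = step_le[OF hv rk _ i rhop_props(1,2)[OF rk] ch, of "tt i"]
    have sl': "u i (action_vec k h r) - tt i \<le> Psi i (tt i) rhop h r - Psi i (tt i) rhop h (Suc r)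
          + (if rhop r = 1 then Psi i (tt i) rhop h (Suc r) else 0)" using sl r len by simp
    show ?thesis
    proof (cases "rhop r = 1")
      case True
      note rp = rhop_props(3)[OF rk True]
      have va: "valid_vec k A (action_vec k h r)"
        by (rule av_valid[OF kpos]) (use r rk hv len in \<open>auto simp: hvalid_def\<close>)
      have "W i (Suc (Suc (blk r)) * k) (action_vec k h r) (Suc k mod k) \<le> real (Suc (Suc (blk r)) * k) * tt i + 4 * k"
        by (rule W_upper[OF i _ nut[OF i] va]) simp
      then have "Psi i (tt i) rhop h (Suc r) \<le> 4 * k" unfolding Psi_def using rp by simp
      moreover have "blk (Suc r) = Suc (blk r)" by (rule blk_step(1)[OF rk True])
      ultimately show ?thesis using sl' True PP st unfolding x_def Q_def by (simp add: algebra_simps)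
    next
      case False
      then have "1 < rhop r" using rhop_props(1)[OF rk] by simp
      then have "blk (Suc r) = blk r" by (rule blk_step(2)[OF rk])
      then show ?thesis using sl' False PP st unfolding x_def Q_def by (simp add: algebra_simps)
    qed
  qed
  have tl: "(\<Sum>r=Suc D..T. x r) \<le> P (Suc D) - P (Suc T) + (\<Sum>r=Suc D..T. e r)"
    by (rule tele) (use step DT in auto)
  define B where "B = blk (Suc T)"
  have Qb: "\<bar>Q r\<bar> \<le> 6 * k * (B + 1)" if r: "Suc k \<le> r" "r \<le> Suc T" for r
  proof -
    have "\<bar>Psi i (tt i) rhop h r\<bar> \<le> real (rhop r) * (1 + \<bar>tt i\<bar>)"
      by (rule Psi_bound[OF hv]) (use r len i in auto)
    also have "\<dots> \<le> real (k * Suc (blk r)) * 2"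
    proof (rule mult_mono)
      show "real (rhop r) \<le> real (k * Suc (blk r))" using rhop_props(4)[OF r(1)] by (simp only: of_nat_le_iff)
    qed (use ttb in auto)
    finally have a: "\<bar>Psi i (tt i) rhop h r\<bar> \<le> real (k * Suc (blk r)) * 2" .
    have b: "blk r \<le> B" unfolding B_def by (rule blk_mono) (use r in auto)
    have "real (k * Suc (blk r)) * 2 + 4 * k * real (blk r) \<le> 6 * k * (B + 1)"
    proof -
      have bb: "real k * real (blk r) \<le> real k * real B" using b by (intro mult_left_mono) auto
      then show ?thesis by (simp add: algebra_simps; linarith)
    qed
    moreover have "0 \<le> real k * real (blk r)" "0 \<le> real k * real B" by auto
    ultimately show ?thesis using a unfolding Q_def by (simp add: abs_le_iff algebra_simps; linarith)
  qed
  have Pdiff: "P (Suc D) - P (Suc T) \<le> 12 * k * (B + 1)"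
  proof (cases "r0 \<le> Suc T")
    case True
    have "Suc D < r0" unfolding r0_def by simp
    then have "P (Suc D) = Q r0" unfolding P_def by simp
    moreover have "P (Suc T) = Q (Suc T)" unfolding P_def using True by simp
    moreover have "\<bar>Q r0\<bar> \<le> 6 * k * (B + 1)" by (rule Qb) (use True in \<open>auto simp: r0_def\<close>)
    moreover have "\<bar>Q (Suc T)\<bar> \<le> 6 * k * (B + 1)" by (rule Qb) (use True in \<open>auto simp: r0_def\<close>)
    ultimately show ?thesis by (simp add: abs_le_iff; linarith)
  next
    case False
    have "Suc D < r0" unfolding r0_def by simp
    then have "P (Suc D) = Q r0" "P (Suc T) = Q r0" unfolding P_def using False by auto
    then show ?thesis by simp
  qed
  have esum: "(\<Sum>r=Suc D..T. e r) \<le> 2 * (k + 1)"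
  proof -
    have "(\<Sum>r=Suc D..T. e r) = (\<Sum>r\<in>{r\<in>{Suc D..T}. r < r0}. 2)"
      unfolding e_def by (rule sum.inter_filter[symmetric]) simp
    also have "\<dots> = 2 * card {r\<in>{Suc D..T}. r < r0}" by simp
    also have "card {r\<in>{Suc D..T}. r < r0} \<le> card {Suc D..<r0}" by (rule card_mono) auto
    also have "card {Suc D..<r0} \<le> k + 1" unfolding r0_def by simp
    finally show ?thesis by simp
  qed
  have "(\<Sum>r=Suc D..T. x r) = (\<Sum>r=Suc D..T. stage_util k u i h r) - real (T - D) * tt i"
    unfolding x_def by (simp add: sum_subtractf)
  then show ?thesis using tl Pdiff esum unfolding Err_def B_def D_def[symmetric] by simp
qed

end

lemma liminf_max0:
  fixes y :: "nat \<Rightarrow> real"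
  assumes "liminf (\<lambda>T. ereal (y T)) \<le> 0"
  shows "liminf (\<lambda>T. ereal (max (y T) 0)) \<le> 0"
proof (rule ccontr)
  assume "\<not> ?thesis"
  then have "0 < liminf (\<lambda>T. ereal (max (y T) 0))" by simp
  then obtain r where r: "0 < ereal r" "ereal r < liminf (\<lambda>T. ereal (max (y T) 0))"
    using ereal_dense2 by blast
  have "eventually (\<lambda>T. ereal r < ereal (max (y T) 0)) sequentially"
    using r(2) le_Liminf_iff[of "liminf (\<lambda>T. ereal (max (y T) 0))" sequentially "\<lambda>T. ereal (max (y T) 0)"] by simp
  then have "eventually (\<lambda>T. ereal r \<le> ereal (y T)) sequentially"
  proof (rule eventually_mono)
    fix T assume "ereal r < ereal (max (y T) 0)"
    then have "r < max (y T) 0" by (metis less_ereal.simps(1))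
    then show "ereal r \<le> ereal (y T)" using r(1) by (auto simp: max_def split: if_splits)
  qed
  then have "ereal r \<le> liminf (\<lambda>T. ereal (y T))" by (rule Liminf_bounded)
  then have "ereal r \<le> 0" using assms by (rule order_trans)
  then show False using r(1) by simp
qed
lemma div_at_top: "0 < N \<Longrightarrow> filterlim (\<lambda>T::nat. T div N) at_top sequentially"
  unfolding filterlim_at_top
proof (intro allI)
  fix Z :: nat assume N: "0 < N"
  show "eventually (\<lambda>T. Z \<le> T div N) sequentially"
  proof (rule eventually_sequentiallyI[of "Z * N"])
    fix T :: nat assume "Z * N \<le> T"
    then have "(Z * N) div N \<le> T div N" by (rule div_le_mono)
    then show "Z \<le> T div N" using N by simp
  qed
qed

lemma inv_sqrt_0: "(\<lambda>T::nat. inverse (sqrt (real T))) \<longlonglongrightarrow> 0"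
proof -
  have "filterlim (\<lambda>T::nat. sqrt (real T)) at_top sequentially"
    by (rule filterlim_compose[OF sqrt_at_top filterlim_real_sequentially])
  then show ?thesis by (rule tendsto_inverse_0_at_top)
qed
lemma aux_inv: "(a::real) \<noteq> 0 \<Longrightarrow> a / (a * a) = inverse a"
  by (simp add: field_simps)

context G2 begin

lemma blk_over_T: "(\<lambda>T. real (blk (Suc T)) / real T) \<longlonglongrightarrow> 0"
proof -
  have lim: "(\<lambda>T::nat. 2 * inverse (sqrt (real T))) \<longlonglongrightarrow> 2 * 0" by (intro tendsto_mult tendsto_const inv_sqrt_0)
  have ev: "\<forall>\<^sub>F T in sequentially. norm (real (blk (Suc T)) / real T) \<le> 2 * inverse (sqrt (real T))"
  proof (rule eventually_sequentiallyI[of "Suc k"])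
    fix T assume T: "Suc k \<le> T"
    have "blk (Suc T) * blk (Suc T) \<le> 2 * Suc T" by (rule blk_sq) (use T in simp)
    also have "\<dots> \<le> 4 * T" using T by simp
    finally have n: "blk (Suc T) * blk (Suc T) \<le> 4 * T" .
    have r1: "real (blk (Suc T)) * real (blk (Suc T)) \<le> 4 * real T"
      using of_nat_le_iff[of "blk (Suc T) * blk (Suc T)" "4 * T", where 'a=real] n by simp
    have r2: "(2 * sqrt (real T)) ^ 2 = 4 * real T" by (simp add: power_mult_distrib)
    have "real (blk (Suc T)) ^ 2 \<le> 4 * real T" using r1 by (simp add: power2_eq_square)
    then have "real (blk (Suc T)) ^ 2 \<le> (2 * sqrt (real T)) ^ 2" using r2 by simp
    then have b: "real (blk (Suc T)) \<le> 2 * sqrt (real T)"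
      by (rule power2_le_imp_le) simp
    have Tp: "0 < real T" using T by simp
    have "real (blk (Suc T)) / real T \<le> 2 * sqrt (real T) / real T" using b Tp by (simp add: divide_right_mono)
    also have "\<dots> = 2 * inverse (sqrt (real T))"
    proof -
      have sp: "0 < sqrt (real T)" using Tp by simp
      have "2 * sqrt (real T) / real T = 2 * (sqrt (real T) / (sqrt (real T) * sqrt (real T)))" by simp
      also have "\<dots> = 2 * inverse (sqrt (real T))" using aux_inv[of "sqrt (real T)"] sp by simp
      finally show ?thesis .
    qed
    finally show "norm (real (blk (Suc T)) / real T) \<le> 2 * inverse (sqrt (real T))" by simp
  qed
  have lim0: "(\<lambda>T::nat. 2 * inverse (sqrt (real T))) \<longlonglongrightarrow> 0" using lim by simp
  show ?thesis by (rule Lim_null_comparison[OF ev lim0])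
qed

lemma Err_over_T: "(\<lambda>T. (2 + Err T) / real T) \<longlonglongrightarrow> 0"
proof -
  have e: "(2 + Err T) / real T = (4 + 14 * real k) / real T + 12 * real k * (real (blk (Suc T)) / real T)" for T
  proof -
    have e0: "2 + Err T = (4 + 14 * real k) + 12 * real k * real (blk (Suc T))" unfolding Err_def by (simp add: algebra_simps)
    show ?thesis unfolding e0 by (simp add: add_divide_distrib)
  qed
  have "(\<lambda>T. (4 + 14 * real k) / real T + 12 * real k * (real (blk (Suc T)) / real T)) \<longlonglongrightarrow> 0 + 12 * real k * 0"
    by (intro tendsto_add tendsto_mult tendsto_const lim_const_over_n blk_over_T)
  then show ?thesis unfolding e by simp
qed

end

lemma div_real_le: assumes "0 < N" shows "real (T div N) \<le> real T / real N"
proof -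
  have "T div N * N \<le> T" by (rule div_times_less_eq_dividend)
  then have "real (T div N) * real N \<le> real T" by (metis of_nat_le_iff of_nat_mult)
  then show ?thesis using assms by (simp add: le_divide_eq)
qed

context G2 begin

lemma cseq_bound: "i < k \<Longrightarrow> \<bar>cseq i s\<bar> \<le> 1"
  unfolding cseq_def using stage_bound[OF fq_valid, of i s] ph_fq by simp

definition Cc :: "nat \<Rightarrow> nat \<Rightarrow> real" where "Cc i n = (\<Sum>s=1..n. cseq i s) - real n * tt i"

lemma Cc_bound: assumes i: "i < k" shows "Cc i n \<le> 2 * real n"
proof -
  have "(\<Sum>s=1..n. cseq i s) \<le> (\<Sum>s=1..n. 1)" by (rule sum_mono) (use cseq_bound[OF i] in \<open>simp add: abs_le_iff\<close>)
  moreover have "- (real n * tt i) \<le> real n"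
  proof -
    have "\<bar>real n * tt i\<bar> \<le> real n * 1" using tt_bound[OF i] by (simp add: abs_mult mult_left_le)
    then show ?thesis by (simp add: abs_le_iff)
  qed
  ultimately show ?thesis unfolding Cc_def by simp
qed

lemma cons_take: "cons h \<Longrightarrow> cons (take m h)"
  unfolding cons_def by simp

lemma cons_take_iff: assumes "\<not> cons h" "m \<le> length h" shows "cons (take m h) \<longleftrightarrow> m \<le> fdev h"
proof
  assume c: "cons (take m h)"
  show "m \<le> fdev h"
  proof (rule ccontr)
    assume "\<not> m \<le> fdev h"
    then have "\<not> cons (take m h)" using fdev_take(1)[OF assms(1), of m] assms by simp
    then show False using c by simp
  qed
next
  assume "m \<le> fdev h"
  then show "cons (take m h)" unfolding cons_def using fdev_props(3)[OF assms(1)] by simp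
qed

lemma Err_nonneg: "0 \<le> Err T" unfolding Err_def by simp

lemma path_total: assumes i: "i < k" and s: "supp i T h" and N: "0 < N"
  shows "(\<Sum>r=1..T. stage_util k u i h r) \<le> real T * tt i + 2 * real T / real N
     + 2 * real T * indicator {h. cons (take (T div N) h) \<and> \<not> cons h} h + max (Cc i T) 0 + Err T"
proof -
  have len: "length h = T" using s supp_def by simp
  have ind0: "0 \<le> 2 * real T * indicator {h. cons (take (T div N) h) \<and> \<not> cons h} h" by simp
  have n1: "0 \<le> 2 * real T / real N" by simp
  show ?thesis
  proof (cases "cons h")
    case True
    then have "Dv T h = T" unfolding Dv_def by simp
    then have "(\<Sum>r=1..T. stage_util k u i h r) = (\<Sum>r=1..T. cseq i r)" using prefix_part(2)[OF s] by simp
    also have "\<dots> = real T * tt i + Cc i T" unfolding Cc_def by simp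
    finally show ?thesis using ind0 n1 Err_nonneg[of T] by linarith
  next
    case False
    define D where "D = fdev h"
    have DT: "D < T" using fdev_props(1)[OF False] len D_def by simp
    have Dv: "Dv T h = D" unfolding Dv_def D_def using False by simp
    have "{1..T} = {1..D} \<union> {Suc D..T}" using DT by auto
    then have "(\<Sum>r=1..T. stage_util k u i h r) = (\<Sum>r=1..D. stage_util k u i h r) + (\<Sum>r=Suc D..T. stage_util k u i h r)"
      by (simp add: sum.union_disjoint)
    also have "(\<Sum>r=1..D. stage_util k u i h r) = (\<Sum>r=1..D. cseq i r)" using prefix_part(2)[OF s] Dv by simp
    also have "(\<Sum>r=Suc D..T. stage_util k u i h r) \<le> real (T - D) * tt i + Err T"
      using post_part[OF i s False] D_def by simp
    finally have a: "(\<Sum>r=1..T. stage_util k u i h r) \<le> real T * tt i + Cc i D + Err T"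
      unfolding Cc_def using DT by (simp add: of_nat_diff algebra_simps)
    have cb: "Cc i D \<le> 2 * real D" by (rule Cc_bound[OF i])
    show ?thesis
    proof (cases "cons (take (T div N) h)")
      case True
      then have ii: "indicator {h. cons (take (T div N) h) \<and> \<not> cons h} h = (1::real)" using False by simp
      have "real D \<le> real T" using DT by simp
      moreover have "0 \<le> max (Cc i T) 0" by simp
      ultimately show ?thesis unfolding ii using a cb n1 by linarith
    next
      case c: False
      have "T div N \<le> length h" using len by simp
      then have "D < T div N" using cons_take_iff[OF False] c D_def by simp
      then have "real D \<le> real T / real N" using div_real_le[OF N, of T] by simp
      moreover have "2 * (real T / real N) = 2 * real T / real N" by simp
      moreover have "0 \<le> max (Cc i T) 0" by simp
      ultimately show ?thesis using a cb ind0 by linarith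
    qed
  qed
qed

definition Fc :: "nat \<Rightarrow> ('a list \<Rightarrow> 'a pmf) \<Rightarrow> nat \<Rightarrow> real" where
  "Fc i \<tau> n = measure_pmf.prob (hist_dist k (sig i \<tau>) n) {h. cons h}"

lemma prob_take: "m \<le> T \<Longrightarrow> measure_pmf.prob (hist_dist k \<sigma> T) {h. cons (take m h)} = measure_pmf.prob (hist_dist k \<sigma> m) {h. cons h}"
proof -
  assume "m \<le> T"
  then have "hist_dist k \<sigma> m = map_pmf (take m) (hist_dist k \<sigma> T)" using hist_prefix[where m=m and l="T - m" and k=k and \<sigma>=\<sigma>] by simp
  then show ?thesis by simp
qed

lemma Fc_dec: "decseq (Fc i \<tau>)"
proof (rule decseq_SucI)
  fix n
  have "Fc i \<tau> (Suc n) \<le> measure_pmf.prob (hist_dist k (sig i \<tau>) (Suc n)) {h. cons (take n h)}"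
    unfolding Fc_def by (rule measure_pmf.finite_measure_mono) (auto simp: cons_take)
  also have "\<dots> = Fc i \<tau> n" unfolding Fc_def by (rule prob_take) simp
  finally show "Fc i \<tau> (Suc n) \<le> Fc i \<tau> n" .
qed

lemma exp_bound: assumes i: "i < k" and tv: "valid_strat A i \<tau>" and N: "0 < N" and T: "0 < T"
  shows "measure_pmf.expectation (hist_dist k (sig i \<tau>) T) (\<lambda>h. (\<Sum>s=1..T. stage_util k u i h s) / real T)
    \<le> tt i + 2 / real N + (max (Cc i T) 0 + Err T) / real T + 2 * (Fc i \<tau> (T div N) - Fc i \<tau> T)"
proof -
  let ?M = "hist_dist k (sig i \<tau>) T"
  let ?E = "{h. cons (take (T div N) h) \<and> \<not> cons h}"
  define K where "K = tt i + 2 / real N + (max (Cc i T) 0 + Err T) / real T"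
  have fin: "finite (set_pmf ?M)" by (rule finite_support[OF i tv])
  have Tp: "0 < real T" using T by simp
  have pw: "(\<Sum>s=1..T. stage_util k u i h s) / real T \<le> K + 2 * indicator ?E h" if h: "h \<in> set_pmf ?M" for h
  proof -
    have "(\<Sum>s=1..T. stage_util k u i h s) / real T \<le> (real T * tt i + 2 * real T / real N
     + 2 * real T * indicator ?E h + max (Cc i T) 0 + Err T) / real T"
      by (rule divide_right_mono[OF path_total[OF i support[OF i tv h] N]]) simp
    also have "\<dots> = K + 2 * indicator ?E h" unfolding K_def using Tp by (simp add: field_simps)
    finally show ?thesis .
  qed
  have "measure_pmf.expectation ?M (\<lambda>h. (\<Sum>s=1..T. stage_util k u i h s) / real T)
      \<le> measure_pmf.expectation ?M (\<lambda>h. K + 2 * indicator ?E h)"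
    by (rule integral_mono_AE) (use fin pw in \<open>auto simp: integrable_measure_pmf_finite AE_measure_pmf_iff\<close>)
  also have "\<dots> = K + 2 * measure_pmf.prob ?M ?E"
    using fin by (simp add: integrable_measure_pmf_finite)
  also have "?E = {h. cons (take (T div N) h)} - {h. cons h}" by auto
  also have "measure_pmf.prob ?M ({h. cons (take (T div N) h)} - {h. cons h})
      = measure_pmf.prob ?M {h. cons (take (T div N) h)} - measure_pmf.prob ?M {h. cons h}"
    by (rule measure_pmf.finite_measure_Diff) (auto simp: cons_take)
  also have "measure_pmf.prob ?M {h. cons (take (T div N) h)} = Fc i \<tau> (T div N)"
    unfolding Fc_def by (rule prob_take) simp
  also have "measure_pmf.prob ?M {h. cons h} = Fc i \<tau> T" unfolding Fc_def ..
  finally show ?thesis unfolding K_def by simp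
qed

end

context G2 begin

lemma avg_cseq: assumes i: "i < k"
  shows "liminf (\<lambda>T. ereal ((\<Sum>s=1..T. cseq i s) / real T)) = ereal (tt i)"
  using gu_fq[OF i] unfolding gu_pure ph_fq cseq_def .

lemma Cc_liminf: assumes i: "i < k" shows "liminf (\<lambda>T. ereal (Cc i T / real T)) \<le> 0"
proof -
  have "liminf (\<lambda>T. ereal (Cc i T / real T)) = liminf (\<lambda>T. ereal (- tt i) + ereal ((\<Sum>s=1..T. cseq i s) / real T))"
  proof (rule Liminf_eq)
    show "\<forall>\<^sub>F T in sequentially. ereal (Cc i T / real T) = ereal (- tt i) + ereal ((\<Sum>s=1..T. cseq i s) / real T)"
    proof (rule eventually_sequentiallyI[of 1])
      fix T :: nat assume "1 \<le> T"
      then have "Cc i T / real T = - tt i + (\<Sum>s=1..T. cseq i s) / real T" unfolding Cc_def by (simp add: field_simps)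
      then show "ereal (Cc i T / real T) = ereal (- tt i) + ereal ((\<Sum>s=1..T. cseq i s) / real T)" by simp
    qed
  qed
  also have "\<dots> = ereal (- tt i) + liminf (\<lambda>T. ereal ((\<Sum>s=1..T. cseq i s) / real T))"
    by (rule ereal_liminf_lim_add) auto
  also have "\<dots> = 0" using avg_cseq[OF i] by simp
  finally show ?thesis by simp
qed

lemma dev_bound_N: assumes i: "i < k" and tv: "valid_strat A i \<tau>" and N: "0 < N"
  shows "game_utility k u (sig i \<tau>) i \<le> ereal (tt i + 2 / real N)"
proof -
  obtain L where L: "Fc i \<tau> \<longlonglongrightarrow> L"
    using decseq_convergent[OF Fc_dec, of 0 i \<tau>] unfolding Fc_def by auto
  have L2: "(\<lambda>T. Fc i \<tau> (T div N)) \<longlonglongrightarrow> L"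
    by (rule filterlim_compose[OF L div_at_top[OF N]])
  define a where "a T = tt i + 2 / real N + (2 + Err T) / real T + 2 * (Fc i \<tau> (T div N) - Fc i \<tau> T)" for T
  have alim: "a \<longlonglongrightarrow> tt i + 2 / real N + 0 + 2 * (L - L)"
    unfolding a_def by (intro tendsto_add tendsto_mult tendsto_diff tendsto_const Err_over_T L L2)
  then have alim': "(\<lambda>T. ereal (a T)) \<longlonglongrightarrow> ereal (tt i + 2 / real N)" by (simp add: tendsto_ereal)
  have ev: "\<forall>\<^sub>F T in sequentially.
     ereal (measure_pmf.expectation (hist_dist k (sig i \<tau>) T) (\<lambda>h. (\<Sum>s=1..T. stage_util k u i h s) / real T))
       \<le> ereal (a T) + ereal (max (Cc i T / real T) 0)"
  proof (rule eventually_sequentiallyI[of 1])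
    fix T :: nat assume T: "1 \<le> T"
    then have Tp: "0 < real T" by simp
    have e1: "measure_pmf.expectation (hist_dist k (sig i \<tau>) T) (\<lambda>h. (\<Sum>s=1..T. stage_util k u i h s) / real T)
      \<le> tt i + 2 / real N + (max (Cc i T) 0 + Err T) / real T + 2 * (Fc i \<tau> (T div N) - Fc i \<tau> T)"
      by (rule exp_bound[OF i tv N]) (use T in simp)
    have "max (Cc i T) 0 / real T = max (Cc i T / real T) 0" using Tp by (simp add: max_def divide_le_0_iff)
    then have e2: "(max (Cc i T) 0 + Err T) / real T \<le> (2 + Err T) / real T + max (Cc i T / real T) 0"
      using Tp by (simp add: add_divide_distrib divide_right_mono)
    have "measure_pmf.expectation (hist_dist k (sig i \<tau>) T) (\<lambda>h. (\<Sum>s=1..T. stage_util k u i h s) / real T)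
       \<le> a T + max (Cc i T / real T) 0" using e1 e2 unfolding a_def by linarith
    then show "ereal (measure_pmf.expectation (hist_dist k (sig i \<tau>) T) (\<lambda>h. (\<Sum>s=1..T. stage_util k u i h s) / real T))
       \<le> ereal (a T) + ereal (max (Cc i T / real T) 0)"
      by (simp only: plus_ereal.simps(1) ereal_less_eq(3))
  qed
  have "game_utility k u (sig i \<tau>) i \<le> liminf (\<lambda>T. ereal (a T) + ereal (max (Cc i T / real T) 0))"
    unfolding game_utility_def by (rule Liminf_mono[OF ev])
  also have "\<dots> = ereal (tt i + 2 / real N) + liminf (\<lambda>T. ereal (max (Cc i T / real T) 0))"
    by (rule ereal_liminf_lim_add[OF alim']) simp
  also have "\<dots> \<le> ereal (tt i + 2 / real N) + 0"
    by (rule add_left_mono) (rule liminf_max0[OF Cc_liminf[OF i]])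
  finally show ?thesis by simp
qed

lemma dev_bound: assumes i: "i < k" and tv: "valid_strat A i \<tau>"
  shows "game_utility k u (sig i \<tau>) i \<le> ereal (tt i)"
proof -
  have "(\<lambda>N. tt i + 2 / real N) \<longlonglongrightarrow> tt i + 0"
    by (intro tendsto_add tendsto_const lim_const_over_n)
  then have "(\<lambda>N. ereal (tt i + 2 / real N)) \<longlonglongrightarrow> ereal (tt i + 0)" by (rule tendsto_ereal)
  then have lim: "(\<lambda>N. ereal (tt i + 2 / real N)) \<longlonglongrightarrow> ereal (tt i)" by simp
  show ?thesis
    by (rule LIMSEQ_le_const[OF lim]) (use dev_bound_N[OF i tv] in \<open>auto intro!: exI[of _ 1]\<close>)
qed

lemma dir2_G2: "valid_pure k A fq \<and> is_equilibrium k A u (pure_profile fq) \<and>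
   (\<forall>i<k. game_utility k u (pure_profile fq) i = ereal (tt i))"
proof (intro conjI allI impI)
  show "valid_pure k A fq" by (rule fq_valid)
  show "is_equilibrium k A u (pure_profile fq)"
    unfolding is_equilibrium_def
  proof (intro conjI allI impI)
    show "valid_profile k A (pure_profile fq)"
      using fq_valid unfolding valid_profile_def valid_strat_def valid_pure_def pure_profile_def by auto
    fix i \<tau> assume i: "i < k" and tv: "valid_strat A i \<tau>"
    have "game_utility k u ((pure_profile fq)(i := \<tau>)) i \<le> ereal (tt i)"
      using dev_bound[OF i tv] unfolding sig_def .
    then show "game_utility k u ((pure_profile fq)(i := \<tau>)) i \<le> game_utility k u (pure_profile fq) i"
      using gu_fq[OF i] by simp
  qed
  fix i assume "i < k" then show "game_utility k u (pure_profile fq) i = ereal (tt i)" by (rule gu_fq)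
qed

end

theorem lemma4:
  fixes k :: nat and A :: "nat \<Rightarrow> 'a set" and u :: "nat \<Rightarrow> 'a list \<Rightarrow> real"
    and t :: "nat \<Rightarrow> real"
  assumes "0 < k"
    and "\<And>i. i < k \<Longrightarrow> finite (A i) \<and> A i \<noteq> {}"
    and "\<And>i a. i < k \<Longrightarrow> valid_vec k A a \<Longrightarrow> \<bar>u i a\<bar> \<le> 1"
    and "\<And>i. i < k \<Longrightarrow> nu k A u i \<le> ereal (t i)"
  shows "(\<exists>f. valid_pure k A f \<and> is_equilibrium k A u (pure_profile f) \<and>
             (\<forall>i<k. game_utility k u (pure_profile f) i = ereal (t i)))
     \<longleftrightarrow> (\<exists>p. is_inf_path k A p \<and> (\<forall>i<k. mean_payoff u p i = ereal (t i)))"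
proof -
  interpret G k A u using assms(1-3) by unfold_locales auto
  show ?thesis
  proof
    assume "\<exists>f. valid_pure k A f \<and> is_equilibrium k A u (pure_profile f) \<and>
             (\<forall>i<k. game_utility k u (pure_profile f) i = ereal (t i))"
    then obtain f where f: "valid_pure k A f" "\<forall>i<k. game_utility k u (pure_profile f) i = ereal (t i)" by blast
    show "\<exists>p. is_inf_path k A p \<and> (\<forall>i<k. mean_payoff u p i = ereal (t i))" by (rule dir1[OF f])
  next
    assume "\<exists>p. is_inf_path k A p \<and> (\<forall>i<k. mean_payoff u p i = ereal (t i))"
    then obtain p where p: "is_inf_path k A p" "\<forall>i<k. mean_payoff u p i = ereal (t i)" by blast
    interpret G2 k A u p t using p assms(4) by unfold_locales auto
    show "\<exists>f. valid_pure k A f \<and> is_equilibrium k A u (pure_profile f) \<and>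
             (\<forall>i<k. game_utility k u (pure_profile f) i = ereal (t i))"
      using dir2_G2 by blast
  qed
qed

end
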